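(* Let $\mathcal{F}$ be a saturated fusion system over a finite $p$-group $S$, and let $P\le Q\le S$ be such that $P\trianglelefteq\mathcal{F}$ and $Q/P\trianglelefteq\mathcal{F}/P$. If $Q$ is abelian, or if $P\le Z(\mathcal{F})$, then $Q\trianglelefteq\mathcal{F}$.
   Context: A fusion system $\mathcal{F}$ over a finite $p$-group $S$ is a category whose objects are the subgroups of $S$, with $\mathrm{Hom}_S(P,Q)\subseteq\mathrm{Hom}_{\mathcal{F}}(P,Q)\subseteq\mathrm{Inj}(P,Q)$, every morphism an isomorphism in $\mathcal{F}$ followed by an inclusion; saturation is given by Puig's Sylow and extension axioms. A subgroup $Q\le S$ is normal in $\mathcal{F}$ ($Q\trianglelefteq\mathcal{F}$) if every morphism of $\mathcal{F}$ extends to a morphism of $\mathcal{F}$ sending $Q$ to itself; it is central if every morphism extends to one sending $Q$ to itself via the identity, and $Z(\mathcal{F})$ is the largest central subgroup. For $P\trianglelefteq\mathcal{F}$, $\mathcal{F}/P$ is the fusion system over $S/P$ whose morphisms $R_1/P\to R_2/P$ (for $P\le R_1,R_2\le S$) are the maps induced by morphisms $\varphi\in\mathrm{Hom}_{\mathcal{F}}(R_1,R_2)$. *)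

theory Defs
  imports "HOL-Algebra.Algebra"
begin

text \<open>Fusion systems over a finite group G (the p-group S), in the HOL-Algebra idiom.
A fusion system is given as a function F assigning to subgroups P, Q of G the set
F P Q of morphisms P -> Q. Morphisms are functions extensional on their domain.\<close>

definition conjmap :: "('a, 'b) monoid_scheme \<Rightarrow> 'a \<Rightarrow> 'a \<Rightarrow> 'a" where
  "conjmap G g = (\<lambda>x. g \<otimes>\<^bsub>G\<^esub> x \<otimes>\<^bsub>G\<^esub> inv\<^bsub>G\<^esub> g)"

definition HomS :: "('a, 'b) monoid_scheme \<Rightarrow> 'a set \<Rightarrow> 'a set \<Rightarrow> ('a \<Rightarrow> 'a) set" where
  "HomS G P Q = {restrict (conjmap G g) P | g. g \<in> carrier G \<and> conjmap G g ` P \<subseteq> Q}"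

definition InjHom :: "('a, 'b) monoid_scheme \<Rightarrow> 'a set \<Rightarrow> 'a set \<Rightarrow> ('a \<Rightarrow> 'a) set" where
  "InjHom G P Q = {\<phi>. \<phi> \<in> extensional P \<and> \<phi> \<in> hom (G\<lparr>carrier := P\<rparr>) (G\<lparr>carrier := Q\<rparr>) \<and> inj_on \<phi> P}"

definition fusion_system ::
  "('a, 'b) monoid_scheme \<Rightarrow> ('a set \<Rightarrow> 'a set \<Rightarrow> ('a \<Rightarrow> 'a) set) \<Rightarrow> bool" where
  "fusion_system G F \<longleftrightarrow>
     (\<forall>P Q. \<not> (subgroup P G \<and> subgroup Q G) \<longrightarrow> F P Q = {}) \<and>
     (\<forall>P Q. subgroup P G \<and> subgroup Q G \<longrightarrow> HomS G P Q \<subseteq> F P Q \<and> F P Q \<subseteq> InjHom G P Q) \<and>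
     (\<forall>P Q R \<phi> \<psi>. \<phi> \<in> F P Q \<and> \<psi> \<in> F Q R \<longrightarrow> restrict (\<psi> \<circ> \<phi>) P \<in> F P R) \<and>
     (\<forall>P Q \<phi>. \<phi> \<in> F P Q \<longrightarrow>
        \<phi> \<in> F P (\<phi> ` P) \<and> restrict (inv_into P \<phi>) (\<phi> ` P) \<in> F (\<phi> ` P) P)"

definition normalizerS :: "('a, 'b) monoid_scheme \<Rightarrow> 'a set \<Rightarrow> 'a set" where
  "normalizerS G P = {g \<in> carrier G. conjmap G g ` P = P}"

definition centralizerS :: "('a, 'b) monoid_scheme \<Rightarrow> 'a set \<Rightarrow> 'a set" where
  "centralizerS G P = {g \<in> carrier G. \<forall>x\<in>P. g \<otimes>\<^bsub>G\<^esub> x = x \<otimes>\<^bsub>G\<^esub> g}"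

definition fully_normalized where
  "fully_normalized G F P \<longleftrightarrow>
     (\<forall>\<phi>\<in>F P (carrier G). card (normalizerS G (\<phi> ` P)) \<le> card (normalizerS G P))"

definition fully_centralized where
  "fully_centralized G F P \<longleftrightarrow>
     (\<forall>\<phi>\<in>F P (carrier G). card (centralizerS G (\<phi> ` P)) \<le> card (centralizerS G P))"

definition N_phi where
  "N_phi G P \<phi> = {g \<in> normalizerS G P. \<exists>h\<in>carrier G.
       \<forall>x\<in>P. \<phi> (conjmap G g x) = conjmap G h (\<phi> x)}"

definition saturated_fusion_system where
  "saturated_fusion_system p G F \<longleftrightarrow> fusion_system G F \<and>
     \<comment> \<open>Sylow axiom: fully normalized implies fully centralized and
         Aut_S(P) is a Sylow p-subgroup of Aut_F(P) (Aut_S(P) being a p-group,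
         this means the index is prime to p)\<close>
     (\<forall>P. subgroup P G \<and> fully_normalized G F P \<longrightarrow>
        fully_centralized G F P \<and>
        (\<exists>m. card (F P P) = card (HomS G P P) * m \<and> \<not> p dvd m)) \<and>
     \<comment> \<open>extension axiom\<close>
     (\<forall>P \<phi>. subgroup P G \<and> \<phi> \<in> F P (carrier G) \<and> fully_centralized G F (\<phi> ` P) \<longrightarrow>
        (\<exists>\<psi>\<in>F (N_phi G P \<phi>) (carrier G). \<forall>x\<in>P. \<psi> x = \<phi> x))"

definition fusion_normal where
  "fusion_normal G F Q \<longleftrightarrow> subgroup Q G \<and>
     (\<forall>P R \<phi>. \<phi> \<in> F P R \<longrightarrow>
        (\<exists>A B \<psi>. P \<subseteq> A \<and> Q \<subseteq> A \<and> \<psi> \<in> F A B \<and> (\<forall>x\<in>P. \<psi> x = \<phi> x) \<and> \<psi> ` Q = Q))"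

definition fusion_central where
  "fusion_central G F Q \<longleftrightarrow> subgroup Q G \<and>
     (\<forall>P R \<phi>. \<phi> \<in> F P R \<longrightarrow>
        (\<exists>A B \<psi>. P \<subseteq> A \<and> Q \<subseteq> A \<and> \<psi> \<in> F A B \<and> (\<forall>x\<in>P. \<psi> x = \<phi> x) \<and> (\<forall>x\<in>Q. \<psi> x = x)))"

definition fusion_center where
  "fusion_center G F = \<Union> {Q. fusion_central G F Q}"

text \<open>The quotient F/P, a fusion system over G Mod P: morphisms R1/P -> R2/P induced by
morphisms phi in Hom_F(R1,R2), P <= R1, R2 (with phi(P) = P so that phi induces a map).\<close>
definition fusion_quotient ::
  "('a, 'b) monoid_scheme \<Rightarrow> ('a set \<Rightarrow> 'a set \<Rightarrow> ('a \<Rightarrow> 'a) set) \<Rightarrow> 'a set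
     \<Rightarrow> 'a set set \<Rightarrow> 'a set set \<Rightarrow> ('a set \<Rightarrow> 'a set) set" where
  "fusion_quotient G F P A1 A2 =
     {\<psi>. \<exists>R1 R2 \<phi>. P \<subseteq> R1 \<and> P \<subseteq> R2 \<and> \<phi> \<in> F R1 R2 \<and> \<phi> ` P = P \<and>
          A1 = (\<lambda>r. P #>\<^bsub>G\<^esub> r) ` R1 \<and> A2 = (\<lambda>r. P #>\<^bsub>G\<^esub> r) ` R2 \<and>
          \<psi> \<in> extensional A1 \<and> (\<forall>r\<in>R1. \<psi> (P #>\<^bsub>G\<^esub> r) = P #>\<^bsub>G\<^esub> \<phi> r)}"

end

theory Submission
  imports Defs
begin

lemma pgroup_fixed_point:
  fixes H (structure) and E :: "'e set" and act :: "'h \<Rightarrow> 'e \<Rightarrow> 'e" and p :: nat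
  assumes grp: "group H" and pr: "Factorial_Ring.prime p" and ord: "order H = p ^ k"
    and finE: "finite E" and ndvd: "\<not> p dvd card E"
    and closed: "\<And>h x. h \<in> carrier H \<Longrightarrow> x \<in> E \<Longrightarrow> act h x \<in> E"
    and one: "\<And>x. x \<in> E \<Longrightarrow> act \<one> x = x"
    and mult: "\<And>g h x. g \<in> carrier H \<Longrightarrow> h \<in> carrier H \<Longrightarrow> x \<in> E \<Longrightarrow> act (g \<otimes> h) x = act g (act h x)"
  shows "\<exists>x\<in>E. \<forall>h\<in>carrier H. act h x = x"
proof -
  interpret H: group H by (rule grp)
  define \<phi> where "\<phi> = (\<lambda>h. restrict (act h) E)"
  have bij: "\<phi> h \<in> Bij E" if h: "h \<in> carrier H" for h
  proof -
    have "bij_betw (act h) E E"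
    proof (rule bij_betwI[where g = "act (inv h)"])
      show "act h \<in> E \<rightarrow> E" using closed h by auto
      show "act (inv h) \<in> E \<rightarrow> E" using closed h by auto
      show "act (inv h) (act h x) = x" if "x \<in> E" for x
        using mult[of "inv h" h x] one[of x] h that by simp
      show "act h (act (inv h) y) = y" if "y \<in> E" for y
        using mult[of h "inv h" y] one[of y] h that by simp
    qed
    then show ?thesis unfolding \<phi>_def Bij_def by (simp add: bij_betw_def inj_on_def)
  qed
  have hom: "group_hom H (BijGroup E) \<phi>"
  proof (rule group_hom.intro)
    show "group H" by (rule grp)
    show "group (BijGroup E)" by (rule group_BijGroup)
    show "group_hom_axioms H (BijGroup E) \<phi>"
      unfolding group_hom_axioms_def hom_def
    proof (intro CollectI conjI ballI)
      show "\<phi> \<in> carrier H \<rightarrow> carrier (BijGroup E)" using bij by (auto simp: BijGroup_def)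
      fix x y assume x: "x \<in> carrier H" and y: "y \<in> carrier H"
      show "\<phi> (x \<otimes> y) = \<phi> x \<otimes>\<^bsub>BijGroup E\<^esub> \<phi> y"
        using bij[OF x] bij[OF y] x y
        by (auto simp: BijGroup_def \<phi>_def compose_def mult closed intro!: restrict_ext)
    qed
  qed
  interpret A: group_action H E \<phi> unfolding group_action_def by (rule hom)
  have orbsz: "\<exists>i. card Orb = p ^ i" if OI: "Orb \<in> orbits H E \<phi>" for Orb
  proof -
    obtain x where x: "x \<in> E" "Orb = orbit H \<phi> x" using OI[unfolded orbits_def] by blast
    have "card Orb * card (stabilizer H \<phi> x) = p ^ k"
      using A.orbit_stabilizer_theorem[OF x(1)] x(2) ord by simp
    then have "card Orb dvd p ^ k" by (metis dvd_triv_left)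
    then show ?thesis using divides_primepow_nat[OF pr] by auto
  qed
  show ?thesis
  proof (rule ccontr)
    assume nf: "\<not> ?thesis"
    have "p dvd card Orb" if OI: "Orb \<in> orbits H E \<phi>" for Orb
    proof -
      obtain x where x: "x \<in> E" "Orb = orbit H \<phi> x" using OI[unfolded orbits_def] by blast
      obtain i where i: "card Orb = p ^ i" using orbsz[OF OI] by auto
      have "x \<in> Orb" using A.orbit_refl[OF x(1)] x(2) by simp
      have "Orb \<subseteq> E" using x A.element_image unfolding orbit_def by auto
      have "i \<noteq> 0"
      proof
        assume "i = 0"
        then have "card Orb = 1" using i by simp
        then obtain y where "Orb = {y}" by (meson card_1_singletonE)
        then have "Orb = {x}" using \<open>x \<in> Orb\<close> by simp
        then have "\<forall>h\<in>carrier H. act h x = x"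
          using x unfolding orbit_def \<phi>_def by auto
        then show False using nf x(1) by blast
      qed
      then show ?thesis using i pr by (simp add: dvd_power)
    qed
    then have "p dvd (\<Sum>Orb\<in>orbits H E \<phi>. card Orb)" by (simp add: dvd_sum)
    moreover have "(\<Sum>Orb\<in>orbits H E \<phi>. card Orb) = card E"
      using A.disjoint_sum[OF finE, of "\<lambda>_. 1::nat"] by simp
    ultimately show False using ndvd by simp
  qed
qed

locale sfs = group G for G :: "('a, 'b) monoid_scheme" (structure) +
  fixes F :: "'a set \<Rightarrow> 'a set \<Rightarrow> ('a \<Rightarrow> 'a) set" and p :: nat
  assumes finG: "finite (carrier G)" and prp: "Factorial_Ring.prime p"
    and pgrp: "\<exists>n. order G = p ^ n"
    and sat: "saturated_fusion_system p G F"
begin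

lemma fs: "fusion_system G F" using sat unfolding saturated_fusion_system_def by (rule conjunct1)

lemma fs1: "\<not> (subgroup U G \<and> subgroup V G) \<Longrightarrow> F U V = {}"
  using fs unfolding fusion_system_def by (elim conjE) (erule allE, erule allE, erule mp)

lemma fs2: "subgroup U G \<Longrightarrow> subgroup V G \<Longrightarrow> HomS G U V \<subseteq> F U V \<and> F U V \<subseteq> InjHom G U V"
  using fs unfolding fusion_system_def by (elim conjE) (erule allE, erule allE, erule mp, rule conjI)

lemma F_comp: "\<phi> \<in> F U V \<Longrightarrow> \<psi> \<in> F V W \<Longrightarrow> restrict (\<psi> \<circ> \<phi>) U \<in> F U W"
  using fs unfolding fusion_system_def by (elim conjE) (erule allE, erule allE, erule allE, erule allE, erule allE, erule mp, rule conjI)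

lemma F_img_inv: "\<phi> \<in> F U V \<Longrightarrow> \<phi> \<in> F U (\<phi> ` U) \<and> restrict (inv_into U \<phi>) (\<phi> ` U) \<in> F (\<phi> ` U) U"
  using fs unfolding fusion_system_def by (elim conjE) (erule allE, erule allE, erule allE, erule mp)

lemma F_img: "\<phi> \<in> F U V \<Longrightarrow> \<phi> \<in> F U (\<phi> ` U)"
  using F_img_inv by blast

lemma F_invm: "\<phi> \<in> F U V \<Longrightarrow> restrict (inv_into U \<phi>) (\<phi> ` U) \<in> F (\<phi> ` U) U"
  using F_img_inv by blast

lemma F_sub: assumes "\<phi> \<in> F U V" shows "subgroup U G" "subgroup V G"
  using fs1[of U V] assms by auto

lemma F_InjHom: assumes "\<phi> \<in> F U V" shows "\<phi> \<in> InjHom G U V"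
  using fs2[OF F_sub[OF assms]] assms by blast

lemma F_ext: assumes "\<phi> \<in> F U V" shows "\<phi> \<in> extensional U"
  using F_InjHom[OF assms] unfolding InjHom_def by blast

lemma F_injon: assumes "\<phi> \<in> F U V" shows "inj_on \<phi> U"
  using F_InjHom[OF assms] unfolding InjHom_def by blast

lemma F_map: assumes "\<phi> \<in> F U V" "x \<in> U" shows "\<phi> x \<in> V"
proof -
  have "\<phi> \<in> InjHom G U V" by (rule F_InjHom[OF assms(1)])
  then show ?thesis using assms(2) unfolding InjHom_def hom_def by auto
qed

lemma F_mult: assumes "\<phi> \<in> F U V" "x \<in> U" "y \<in> U" shows "\<phi> (x \<otimes> y) = \<phi> x \<otimes> \<phi> y"
proof -
  have "\<phi> \<in> InjHom G U V" by (rule F_InjHom[OF assms(1)])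
  then show ?thesis using assms(2,3) unfolding InjHom_def hom_def by auto
qed

lemma sub_fin: assumes "subgroup U G" shows "finite U"
  by (rule finite_subset[OF subgroup.subset[OF assms] finG])

lemma F_carr: assumes "\<phi> \<in> F U V" "x \<in> U" shows "\<phi> x \<in> carrier G"
  by (rule subgroup.mem_carrier[OF F_sub(2)[OF assms(1)] F_map[OF assms]])

lemma F_imgsub: assumes "\<phi> \<in> F U V" shows "\<phi> ` U \<subseteq> V"
  using F_map[OF assms] by blast

lemma F_one: assumes "\<phi> \<in> F U V" shows "\<phi> \<one> = \<one>"
proof -
  have U: "subgroup U G" using F_sub[OF assms] by blast
  have "\<phi> \<one> \<otimes> \<phi> \<one> = \<phi> \<one> \<otimes> \<one>"
    using F_mult[OF assms, of \<one> \<one>] subgroup.one_closed[OF U] F_carr[OF assms] by simp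
  then show ?thesis using F_carr[OF assms subgroup.one_closed[OF U]] l_cancel by blast
qed

lemma F_inv: assumes "\<phi> \<in> F U V" "x \<in> U" shows "\<phi> (inv x) = inv (\<phi> x)"
proof -
  have U: "subgroup U G" using F_sub[OF assms(1)] by blast
  have xi: "inv x \<in> U" by (rule subgroup.m_inv_closed[OF U assms(2)])
  have "\<phi> (inv x) \<otimes> \<phi> x = \<one>"
    using F_mult[OF assms(1) xi assms(2)] F_one[OF assms(1)] subgroup.mem_carrier[OF U assms(2)]
    by simp
  then show ?thesis using inv_equality[OF _ F_carr[OF assms] F_carr[OF assms(1) xi]] by simp
qed


lemma F_img_subgroup: "\<phi> \<in> F U V \<Longrightarrow> subgroup (\<phi> ` U) G"
  using F_img F_sub by blast

lemma conj_F: assumes "subgroup U G" "subgroup V G" "g \<in> carrier G" "conjmap G g ` U \<subseteq> V"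
  shows "restrict (conjmap G g) U \<in> F U V"
proof -
  have "restrict (conjmap G g) U \<in> HomS G U V" unfolding HomS_def using assms by blast
  then show ?thesis using fs2[OF assms(1,2)] by blast
qed

lemma conj_one: "x \<in> carrier G \<Longrightarrow> conjmap G \<one> x = x"
  unfolding conjmap_def by simp

lemma incl_F: assumes "subgroup U G" "subgroup V G" "U \<subseteq> V"
  shows "restrict (\<lambda>x. x) U \<in> F U V"
proof -
  have "restrict (conjmap G \<one>) U = restrict (\<lambda>x. x) U"
    using assms(1) by (metis conj_one subgroup.mem_carrier restrict_ext)
  moreover have "conjmap G \<one> ` U \<subseteq> V"
  proof
    fix y assume "y \<in> conjmap G \<one> ` U"
    then obtain x where "x \<in> U" "y = conjmap G \<one> x" by blast
    then show "y \<in> V" using assms by (metis conj_one subgroup.mem_carrier subsetD)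
  qed
  ultimately show ?thesis using conj_F[OF assms(1,2) one_closed] by simp
qed

lemma F_restr: assumes "\<phi> \<in> F U V" "subgroup U' G" "U' \<subseteq> U" "subgroup V' G" "\<phi> ` U' \<subseteq> V'"
  shows "restrict \<phi> U' \<in> F U' V'"
proof -
  have U: "subgroup U G" using F_sub[OF assms(1)] by blast
  have 1: "restrict (\<phi> \<circ> restrict (\<lambda>x. x) U') U' \<in> F U' V"
    using F_comp[OF incl_F[OF assms(2) U assms(3)] assms(1)] .
  have e1: "restrict (\<phi> \<circ> restrict (\<lambda>x. x) U') U' = restrict \<phi> U'"
    by (auto intro!: restrict_ext)
  have 2: "restrict \<phi> U' \<in> F U' (\<phi> ` U')" using F_img[OF 1[unfolded e1]] by simp
  have S: "subgroup (\<phi> ` U') G" using F_sub(2)[OF 2] .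
  have 3: "restrict (restrict (\<lambda>x. x) (\<phi> ` U') \<circ> restrict \<phi> U') U' \<in> F U' V'"
    using F_comp[OF 2 incl_F[OF S assms(4,5)]] .
  have e2: "restrict (restrict (\<lambda>x. x) (\<phi> ` U') \<circ> restrict \<phi> U') U' = restrict \<phi> U'"
    by (auto intro!: restrict_ext)
  show ?thesis using 3 e2 by simp
qed

lemma F_cod: assumes "\<phi> \<in> F U V" "subgroup V' G" "\<phi> ` U \<subseteq> V'" shows "\<phi> \<in> F U V'"
proof -
  have "restrict \<phi> U \<in> F U V'" using F_restr[OF assms(1) F_sub(1)[OF assms(1)] subset_refl assms(2,3)] .
  moreover have "restrict \<phi> U = \<phi>" using F_ext[OF assms(1)] by (simp add: extensional_restrict)
  ultimately show ?thesis by simp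
qed

lemma F_toS: "\<phi> \<in> F U V \<Longrightarrow> \<phi> \<in> F U (carrier G)"
  using F_cod subgroup_self F_carr by blast

lemma F_card: "\<phi> \<in> F U V \<Longrightarrow> card (\<phi> ` U) = card U"
  using F_injon card_image by blast

lemma F_card_sub: "\<phi> \<in> F U V \<Longrightarrow> U' \<subseteq> U \<Longrightarrow> card (\<phi> ` U') = card U'"
  using F_injon card_image inj_on_subset by blast

lemma F_aut: assumes "\<phi> \<in> F U U" shows "\<phi> ` U = U"
proof -
  have "finite U" using sub_fin F_sub[OF assms] by blast
  moreover have c: "card (\<phi> ` U) = card U" by (rule F_card[OF assms])
  ultimately show ?thesis using card_subset_eq F_imgsub[OF assms] by metis
qed

lemma F_auto_img_eq: assumes "\<phi> \<in> F U V" "U' \<subseteq> U" "\<phi> ` U' \<subseteq> U'" shows "\<phi> ` U' = U'"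
proof -
  have "finite U'" using sub_fin F_sub[OF assms(1)] assms(2) finite_subset by blast
  moreover have c: "card (\<phi> ` U') = card U'" by (rule F_card_sub[OF assms(1,2)])
  ultimately show ?thesis using card_subset_eq assms(3) by metis
qed

lemma inv_into_F:
  assumes "\<phi> \<in> F U V" "x \<in> U" shows "restrict (inv_into U \<phi>) (\<phi> ` U) (\<phi> x) = x"
proof -
  have "\<phi> x \<in> \<phi> ` U" using assms(2) by blast
  then show ?thesis using inv_into_f_f[OF F_injon[OF assms(1)] assms(2)] by (simp only: restrict_apply')
qed

lemma F_inv_left: assumes "\<phi> \<in> F U V" "y \<in> \<phi> ` U" shows "\<phi> (restrict (inv_into U \<phi>) (\<phi> ` U) y) = y"
proof -
  have "restrict (inv_into U \<phi>) (\<phi> ` U) y = inv_into U \<phi> y" using assms(2) by (simp only: restrict_apply')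
  then show ?thesis using f_inv_into_f[OF assms(2)] by simp
qed

end

context sfs begin

lemma inv_cancel_l [simp]: "x \<in> carrier G \<Longrightarrow> y \<in> carrier G \<Longrightarrow> inv x \<otimes> (x \<otimes> y) = y"
  by (simp add: m_assoc[symmetric])

lemma cancel_inv_l [simp]: "x \<in> carrier G \<Longrightarrow> y \<in> carrier G \<Longrightarrow> x \<otimes> (inv x \<otimes> y) = y"
  by (simp add: m_assoc[symmetric])

lemma conj_carr: "g \<in> carrier G \<Longrightarrow> x \<in> carrier G \<Longrightarrow> conjmap G g x \<in> carrier G"
  unfolding conjmap_def by simp

lemma conj_mult: "g \<in> carrier G \<Longrightarrow> x \<in> carrier G \<Longrightarrow> y \<in> carrier G \<Longrightarrow>
   conjmap G g (x \<otimes> y) = conjmap G g x \<otimes> conjmap G g y"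
proof -
  assume a: "g \<in> carrier G" "x \<in> carrier G" "y \<in> carrier G"
  have "g \<otimes> x \<otimes> inv g \<otimes> (g \<otimes> y \<otimes> inv g) = g \<otimes> x \<otimes> (inv g \<otimes> g) \<otimes> y \<otimes> inv g"
    using a by (simp add: m_assoc)
  then show ?thesis unfolding conjmap_def using a by (simp add: m_assoc)
qed

lemma conj_comp: "g \<in> carrier G \<Longrightarrow> h \<in> carrier G \<Longrightarrow> x \<in> carrier G \<Longrightarrow>
   conjmap G (g \<otimes> h) x = conjmap G g (conjmap G h x)"
  unfolding conjmap_def by (simp add: m_assoc inv_mult_group)

lemma conj_inv_cancel: "g \<in> carrier G \<Longrightarrow> x \<in> carrier G \<Longrightarrow> conjmap G (inv g) (conjmap G g x) = x"
  unfolding conjmap_def by (simp add: m_assoc[symmetric]) (simp add: m_assoc)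

lemma conj_inv_cancel2: "g \<in> carrier G \<Longrightarrow> x \<in> carrier G \<Longrightarrow> conjmap G g (conjmap G (inv g) x) = x"
  using conj_inv_cancel[of "inv g" x] by simp

lemma conj_inj: assumes "g \<in> carrier G" "U \<subseteq> carrier G" shows "inj_on (conjmap G g) U"
proof (rule inj_onI)
  fix x y assume "x \<in> U" "y \<in> U" "conjmap G g x = conjmap G g y"
  then show "x = y" using conj_inv_cancel[OF assms(1)] assms(2) by (metis subsetD)
qed

lemma conj_img_eq: assumes "subgroup U G" "g \<in> carrier G" "conjmap G g ` U \<subseteq> U"
  shows "conjmap G g ` U = U"
proof -
  have "card (conjmap G g ` U) = card U"
    by (rule card_image[OF conj_inj[OF assms(2) subgroup.subset[OF assms(1)]]])
  then show ?thesis using card_subset_eq[OF sub_fin[OF assms(1)] assms(3)] by simp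
qed

lemma normS_iff: assumes "subgroup U G"
  shows "g \<in> normalizerS G U \<longleftrightarrow> g \<in> carrier G \<and> conjmap G g ` U \<subseteq> U"
  using conj_img_eq[OF assms] unfolding normalizerS_def by auto

lemma normS_carr: "normalizerS G U \<subseteq> carrier G"
  unfolding normalizerS_def by auto

lemma normS_subgroup: assumes U: "subgroup U G" shows "subgroup (normalizerS G U) G"
proof (rule subgroupI)
  show "normalizerS G U \<subseteq> carrier G" by (rule normS_carr)
  have "conjmap G \<one> ` U \<subseteq> U"
  proof
    fix y assume "y \<in> conjmap G \<one> ` U"
    then obtain x where "x \<in> U" "y = conjmap G \<one> x" by blast
    then show "y \<in> U" using conj_one[OF subgroup.mem_carrier[OF U]] by simp
  qed
  then have "\<one> \<in> normalizerS G U" using normS_iff[OF U] by simp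
  then show "normalizerS G U \<noteq> {}" by blast
next
  fix a assume a: "a \<in> normalizerS G U"
  then have ac: "a \<in> carrier G" and aU: "conjmap G a ` U = U" unfolding normalizerS_def by auto
  have "conjmap G (inv a) ` U \<subseteq> U"
  proof
    fix y assume "y \<in> conjmap G (inv a) ` U"
    then obtain x where x: "x \<in> U" "y = conjmap G (inv a) x" by blast
    have "x \<in> conjmap G a ` U" using aU x(1) by simp
    then obtain z where z: "z \<in> U" "x = conjmap G a z" by blast
    have "y = z" using x z conj_inv_cancel[OF ac subgroup.mem_carrier[OF U z(1)]] by simp
    then show "y \<in> U" using z by simp
  qed
  then show "inv a \<in> normalizerS G U" using normS_iff[OF U] ac by simp
next
  fix a b assume a: "a \<in> normalizerS G U" and b: "b \<in> normalizerS G U"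
  then have ac: "a \<in> carrier G" and aU: "conjmap G a ` U = U"
    and bc: "b \<in> carrier G" and bU: "conjmap G b ` U = U" unfolding normalizerS_def by auto
  have "conjmap G (a \<otimes> b) ` U \<subseteq> U"
  proof
    fix y assume "y \<in> conjmap G (a \<otimes> b) ` U"
    then obtain x where x: "x \<in> U" "y = conjmap G (a \<otimes> b) x" by blast
    have "y = conjmap G a (conjmap G b x)" using x conj_comp[OF ac bc subgroup.mem_carrier[OF U x(1)]] by simp
    then show "y \<in> U" using aU bU x(1) by blast
  qed
  then show "a \<otimes> b \<in> normalizerS G U" using normS_iff[OF U] ac bc by simp
qed

lemma conj_self: assumes "subgroup U G" "x \<in> U" shows "conjmap G x ` U \<subseteq> U"
proof
  fix y assume "y \<in> conjmap G x ` U"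
  then obtain z where "z \<in> U" "y = conjmap G x z" by blast
  then show "y \<in> U" unfolding conjmap_def
    using assms subgroup.m_closed subgroup.m_inv_closed by metis
qed

lemma sub_normS: assumes "subgroup U G" shows "U \<subseteq> normalizerS G U"
  using normS_iff[OF assms] conj_self[OF assms] subgroup.mem_carrier[OF assms] by blast

lemma card_sub_ppow: assumes "subgroup U G" shows "\<exists>b. card U = p ^ b"
proof -
  obtain n where n: "order G = p ^ n" using pgrp by blast
  have "card (rcosets U) * card U = order G" by (rule lagrange[OF assms])
  then have "card U dvd p ^ n" using n by (metis dvd_triv_right)
  then show ?thesis using divides_primepow_nat[OF prp] by blast
qed

lemma norm_growth:
  assumes U: "subgroup U G" and T: "subgroup T G" and UT: "U \<subseteq> T" and ne: "U \<noteq> T"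
  shows "\<exists>a\<in>T - U. conjmap G a ` U = U"
proof -
  define GT where "GT = G\<lparr>carrier := T\<rparr>"
  have gGT: "group GT" unfolding GT_def by (rule subgroup_imp_group[OF T])
  have UGT: "subgroup U GT" unfolding GT_def by (rule subgroup_incl[OF U T UT])
  define Ecos where "Ecos = (\<Union>a\<in>T. {U #> a})"
  have Ecos_eq: "rcosets\<^bsub>GT\<^esub> U = Ecos" unfolding Ecos_def RCOSETS_def GT_def by simp
  have lag: "card Ecos * card U = card T"
    using group.lagrange[OF gGT UGT] Ecos_eq unfolding GT_def order_def by simp
  obtain a where a: "card T = p ^ a" using card_sub_ppow[OF T] by blast
  obtain b where b: "card U = p ^ b" using card_sub_ppow[OF U] by blast
  have finT: "finite T" by (rule sub_fin[OF T])
  have "card U < card T" using finT UT ne by (meson psubsetI psubset_card_mono)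
  then have ba: "b < a" using a b prp by (metis nat_power_less_imp_less prime_gt_0_nat)
  have p1: "p > 1" using prp prime_gt_1_nat by blast
  have cEcos: "card Ecos = p ^ (a - b)"
  proof -
    have "card Ecos * p ^ b = p ^ (a - b) * p ^ b" using lag a b ba by (simp add: power_add[symmetric])
    then show ?thesis using p1 by simp
  qed
  then have pd: "p dvd card Ecos" using ba by simp
  have UE: "U \<in> Ecos" unfolding Ecos_def using coset_mult_one[OF subgroup.subset[OF U]]
      subgroup.one_closed[OF T] by force
  have finE: "finite Ecos" unfolding Ecos_def by (rule finite_UN_I[OF finT]) simp
  define E where "E = Ecos - {U}"
  have cE: "card E = card Ecos - 1" unfolding E_def by (rule card_Diff_singleton[OF UE])
  have ndvd: "\<not> p dvd card E"
  proof
    assume pE: "p dvd card E"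
    have ge1: "card Ecos \<ge> 1" using cEcos p1 by simp
    have "p dvd card Ecos - card E" by (rule dvd_diff_nat[OF pd pE])
    moreover have "card Ecos - card E = 1" using cE ge1 by simp
    ultimately have "p dvd 1" by simp
    then show False using p1 by simp
  qed
  define H where "H = G\<lparr>carrier := U\<rparr>"
  have gH: "group H" unfolding H_def by (rule subgroup_imp_group[OF U])
  have oH: "order H = p ^ b" unfolding H_def order_def using b by simp
  define act where "act = (\<lambda>x C. C #> inv x)"
  have Tc: "T \<subseteq> carrier G" by (rule subgroup.subset[OF T])
  have Uc: "U \<subseteq> carrier G" by (rule subgroup.subset[OF U])
  have Ecar: "C \<subseteq> carrier G" if CE: "C \<in> Ecos" for C
  proof -
    obtain t where "t \<in> T" "C = U #> t" using CE unfolding Ecos_def by blast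
    then show ?thesis using r_coset_subset_G[OF Uc, of t] Tc by blast
  qed
  have fp: "\<exists>C\<in>E. \<forall>x\<in>carrier H. act x C = C"
  proof (rule pgroup_fixed_point[OF gH prp oH _ ndvd])
    show "finite E" unfolding E_def using finE by simp
  next
    fix x C assume x: "x \<in> carrier H" and C: "C \<in> E"
    have xU: "x \<in> U" using x unfolding H_def by simp
    obtain t where t: "t \<in> T" "C = U #> t" using C unfolding E_def Ecos_def by blast
    have CneU: "U #> t \<noteq> U" using C t unfolding E_def by simp
    have xT: "x \<in> T" using xU UT by blast
    have ti: "t \<otimes> inv x \<in> T" using subgroup.m_closed[OF T t(1) subgroup.m_inv_closed[OF T xT]] .
    have eq: "act x C = U #> (t \<otimes> inv x)" unfolding act_def t(2)
      by (rule coset_mult_assoc[OF Uc]) (use t(1) Tc xU Uc in auto)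
    have "U #> (t \<otimes> inv x) \<noteq> U"
    proof
      assume "U #> (t \<otimes> inv x) = U"
      then have "t \<otimes> inv x \<in> U" using coset_join1[OF _ _ U] ti Tc by blast
      then have "t \<otimes> inv x \<otimes> x \<in> U" using subgroup.m_closed[OF U _ xU] by blast
      then have "t \<in> U" using t(1) Tc xU Uc by (simp add: m_assoc subsetD)
      then show False using CneU coset_join2[OF _ U] Uc by blast
    qed
    then show "act x C \<in> E" using eq ti unfolding E_def Ecos_def by blast
  next
    fix C assume "C \<in> E"
    then show "act \<one>\<^bsub>H\<^esub> C = C" unfolding act_def H_def E_def using Ecar by simp
  next
    fix x y C assume x: "x \<in> carrier H" and y: "y \<in> carrier H" and C: "C \<in> E"
    have xc: "x \<in> carrier G" and yc: "y \<in> carrier G" using x y Uc unfolding H_def by auto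
    have Cc: "C \<subseteq> carrier G" using C Ecar unfolding E_def by blast
    show "act (x \<otimes>\<^bsub>H\<^esub> y) C = act x (act y C)" unfolding act_def H_def
      using coset_mult_assoc[OF Cc inv_closed[OF yc] inv_closed[OF xc]] xc yc
      by (simp add: inv_mult_group)
  qed
  then obtain C where C: "C \<in> E" and fixC: "\<And>x. x \<in> U \<Longrightarrow> C #> inv x = C"
    unfolding act_def H_def by auto
  obtain t where t: "t \<in> T" "C = U #> t" using C unfolding E_def Ecos_def by blast
  have tc: "t \<in> carrier G" using t Tc by blast
  have tU: "t \<notin> U" using C t coset_join2[OF tc U] unfolding E_def by blast
  have "conjmap G t ` U \<subseteq> U"
  proof
    fix y assume "y \<in> conjmap G t ` U"
    then obtain x where x: "x \<in> U" "y = conjmap G t x" by blast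
    have xc: "x \<in> carrier G" using x Uc by blast
    have ix: "inv x \<in> U" using subgroup.m_inv_closed[OF U x(1)] .
    have "U #> (t \<otimes> inv (inv x)) = U #> t"
      using fixC[OF ix] t(2) coset_mult_assoc[OF Uc tc inv_closed[OF inv_closed[OF xc]]] by simp
    then have "U #> (t \<otimes> x) = U #> t" using xc by simp
    then have "t \<otimes> x \<in> U #> t" using rcos_self[OF m_closed[OF tc xc] U] by simp
    then have "t \<otimes> x \<otimes> inv t \<in> U" using subgroup.rcos_module_imp[OF U is_group tc] by blast
    then show "y \<in> U" using x(2) unfolding conjmap_def by simp
  qed
  then have "conjmap G t ` U = U" by (rule conj_img_eq[OF U tc])
  then show ?thesis using t(1) tU by blast
qed

end

lemma fixed_conj:
  fixes A (structure) and H :: "('h, 'c) monoid_scheme" and p :: nat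
  assumes gA: "group A" and finA: "finite (carrier A)" and B: "subgroup B A"
    and ndvd: "\<not> p dvd card (rcosets B)" and pr: "Factorial_Ring.prime p"
    and gH: "group H" and oH: "order H = p ^ k" and \<psi>: "\<psi> \<in> hom H A"
  shows "\<exists>\<eta>\<in>carrier A. \<forall>h\<in>carrier H. \<eta> \<otimes> \<psi> h \<otimes> inv \<eta> \<in> B"
proof -
  interpret A: group A by (rule gA)
  interpret gh: group_hom H A \<psi> using gH gA \<psi> by (simp add: group_hom_def group_hom_axioms_def)
  have Bc: "B \<subseteq> carrier A" by (rule subgroup.subset[OF B])
  define act where "act = (\<lambda>h C. C #> inv (\<psi> h))"
  have psic: "\<psi> h \<in> carrier A" if "h \<in> carrier H" for h using \<psi> that unfolding hom_def by auto
  have rc: "C \<subseteq> carrier A" if CB: "C \<in> rcosets B" for C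
  proof -
    obtain t where "t \<in> carrier A" "C = B #> t" using CB unfolding RCOSETS_def by blast
    then show ?thesis using A.r_coset_subset_G[OF Bc, of t] by blast
  qed
  have "\<exists>C\<in>rcosets B. \<forall>h\<in>carrier H. act h C = C"
  proof (rule pgroup_fixed_point[OF gH pr oH _ ndvd])
    show "finite (rcosets B)" using finite_subset[OF A.rcosets_subset_PowG[OF B]] finA by simp
  next
    fix h C assume h: "h \<in> carrier H" and C: "C \<in> rcosets B"
    obtain \<eta> where \<eta>: "\<eta> \<in> carrier A" "C = B #> \<eta>" using C unfolding RCOSETS_def by blast
    have "act h C = B #> (\<eta> \<otimes> inv (\<psi> h))" unfolding act_def \<eta>(2)
      using A.coset_mult_assoc[OF Bc \<eta>(1) A.inv_closed[OF psic[OF h]]] .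
    then show "act h C \<in> rcosets B" using A.rcosetsI[OF Bc] \<eta>(1) psic[OF h] by simp
  next
    fix C assume C: "C \<in> rcosets B"
    show "act \<one>\<^bsub>H\<^esub> C = C" unfolding act_def using rc[OF C] by simp
  next
    fix g h C assume g: "g \<in> carrier H" and h: "h \<in> carrier H" and C: "C \<in> rcosets B"
    have "inv (\<psi> (g \<otimes>\<^bsub>H\<^esub> h)) = inv (\<psi> h) \<otimes> inv (\<psi> g)"
      using g h psic by (simp add: A.inv_mult_group)
    then show "act (g \<otimes>\<^bsub>H\<^esub> h) C = act g (act h C)" unfolding act_def
      using A.coset_mult_assoc[OF rc[OF C] A.inv_closed[OF psic[OF h]] A.inv_closed[OF psic[OF g]]]
      by simp
  qed
  then obtain C where C: "C \<in> rcosets B" and fx: "\<And>h. h \<in> carrier H \<Longrightarrow> C #> inv (\<psi> h) = C"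
    unfolding act_def by blast
  obtain \<eta> where \<eta>: "\<eta> \<in> carrier A" "C = B #> \<eta>" using C unfolding RCOSETS_def by blast
  have "\<eta> \<otimes> \<psi> h \<otimes> inv \<eta> \<in> B" if h: "h \<in> carrier H" for h
  proof -
    have ph: "\<psi> h \<in> carrier A" by (rule psic[OF h])
    have "B #> (\<eta> \<otimes> inv (\<psi> h)) = B #> \<eta>"
      using fx[OF h] \<eta> A.coset_mult_assoc[OF Bc \<eta>(1) A.inv_closed[OF ph]] by simp
    then have "\<eta> \<otimes> inv (\<psi> h) \<in> B #> \<eta>"
      using A.rcos_self[OF A.m_closed[OF \<eta>(1) A.inv_closed[OF ph]] B] by simp
    then have 1: "\<eta> \<otimes> inv (\<psi> h) \<otimes> inv \<eta> \<in> B"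
      using subgroup.rcos_module_imp[OF B gA \<eta>(1)] by blast
    have "inv (\<eta> \<otimes> inv (\<psi> h) \<otimes> inv \<eta>) = \<eta> \<otimes> \<psi> h \<otimes> inv \<eta>"
      using \<eta>(1) ph by (simp add: A.inv_mult_group A.m_assoc)
    then show ?thesis using subgroup.m_inv_closed[OF B 1] by simp
  qed
  then show ?thesis using \<eta>(1) by blast
qed

context sfs begin

definition AutG :: "'a set \<Rightarrow> ('a \<Rightarrow> 'a) monoid" where
  "AutG U = \<lparr>carrier = F U U, monoid.mult = (\<lambda>f g. restrict (f \<circ> g) U), one = restrict (\<lambda>x. x) U\<rparr>"

lemma AutG_carrier [simp]: "carrier (AutG U) = F U U" unfolding AutG_def by simp
lemma AutG_mult [simp]: "f \<otimes>\<^bsub>AutG U\<^esub> g = restrict (f \<circ> g) U" unfolding AutG_def by simp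
lemma AutG_one [simp]: "\<one>\<^bsub>AutG U\<^esub> = restrict (\<lambda>x. x) U" unfolding AutG_def by simp

lemma AutG_group: assumes U: "subgroup U G" shows "group (AutG U)"
proof (rule groupI)
  fix f g assume "f \<in> carrier (AutG U)" "g \<in> carrier (AutG U)"
  then show "f \<otimes>\<^bsub>AutG U\<^esub> g \<in> carrier (AutG U)" using F_comp by simp
next
  show "\<one>\<^bsub>AutG U\<^esub> \<in> carrier (AutG U)" using incl_F[OF U U] by simp
next
  fix f g h assume f: "f \<in> carrier (AutG U)" and g: "g \<in> carrier (AutG U)" and h: "h \<in> carrier (AutG U)"
  show "f \<otimes>\<^bsub>AutG U\<^esub> g \<otimes>\<^bsub>AutG U\<^esub> h = f \<otimes>\<^bsub>AutG U\<^esub> (g \<otimes>\<^bsub>AutG U\<^esub> h)"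
  proof (simp, rule restrict_ext)
    fix x assume x: "x \<in> U"
    have "h x \<in> U" using F_map h x by simp
    then show "(restrict (f \<circ> g) U \<circ> h) x = (f \<circ> restrict (g \<circ> h) U) x" using x by simp
  qed
next
  fix f assume f: "f \<in> carrier (AutG U)"
  then have f': "f \<in> F U U" by simp
  show "\<one>\<^bsub>AutG U\<^esub> \<otimes>\<^bsub>AutG U\<^esub> f = f"
  proof (simp, rule extensionalityI[of _ U])
    show "restrict (restrict (\<lambda>x. x) U \<circ> f) U \<in> extensional U" by simp
    show "f \<in> extensional U" by (rule F_ext[OF f'])
    fix x assume x: "x \<in> U"
    then show "restrict (restrict (\<lambda>x. x) U \<circ> f) U x = f x" using F_map[OF f' x] by simp
  qed
  have fU: "f ` U = U" by (rule F_aut[OF f'])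
  have iF: "restrict (inv_into U f) U \<in> F U U" using F_invm[OF f'] fU by simp
  have "restrict (inv_into U f) U \<otimes>\<^bsub>AutG U\<^esub> f = \<one>\<^bsub>AutG U\<^esub>"
  proof (simp, rule restrict_ext)
    fix x assume x: "x \<in> U"
    have "f x \<in> U" by (rule F_map[OF f' x])
    then show "(restrict (inv_into U f) U \<circ> f) x = x"
      using inv_into_f_f[OF F_injon[OF f'] x] by simp
  qed
  then show "\<exists>y\<in>carrier (AutG U). y \<otimes>\<^bsub>AutG U\<^esub> f = \<one>\<^bsub>AutG U\<^esub>" using iF by auto
qed

lemma AutG_inv: assumes U: "subgroup U G" and f: "f \<in> F U U"
  shows "inv\<^bsub>AutG U\<^esub> f = restrict (inv_into U f) U"
proof -
  interpret A: group "AutG U" by (rule AutG_group[OF U])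
  have fU: "f ` U = U" by (rule F_aut[OF f])
  have iF: "restrict (inv_into U f) U \<in> F U U" using F_invm[OF f] fU by simp
  have "restrict (inv_into U f) U \<otimes>\<^bsub>AutG U\<^esub> f = \<one>\<^bsub>AutG U\<^esub>"
  proof (simp, rule restrict_ext)
    fix x assume x: "x \<in> U"
    have "f x \<in> U" by (rule F_map[OF f x])
    then show "(restrict (inv_into U f) U \<circ> f) x = x"
      using inv_into_f_f[OF F_injon[OF f] x] by simp
  qed
  then show ?thesis using A.inv_equality f iF by simp
qed

lemma AutG_inv_F: assumes U: "subgroup U G" and f: "f \<in> F U U"
  shows "restrict (inv_into U f) U \<in> F U U"
  using F_invm[OF f] F_aut[OF f] by simp

lemma AutG_inv_app1: assumes f: "f \<in> F U U" and x: "x \<in> U"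
  shows "restrict (inv_into U f) U (f x) = x"
  using inv_into_f_f[OF F_injon[OF f] x] F_map[OF f x] by simp

lemma AutG_inv_app2: assumes f: "f \<in> F U U" and x: "x \<in> U"
  shows "f (restrict (inv_into U f) U x) = x"
proof -
  have "x \<in> f ` U" using F_aut[OF f] x by simp
  then show ?thesis using f_inv_into_f[of x f U] x by simp
qed

lemma HomS_iff: "a \<in> HomS G U V \<longleftrightarrow> (\<exists>g\<in>carrier G. conjmap G g ` U \<subseteq> V \<and> a = restrict (conjmap G g) U)"
  unfolding HomS_def by blast

lemma HomS_F: assumes "subgroup U G" "subgroup V G" shows "HomS G U V \<subseteq> F U V"
  using fs2[OF assms] by blast

lemma HomS_subgroup: assumes U: "subgroup U G" shows "subgroup (HomS G U U) (AutG U)"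
proof -
  interpret A: group "AutG U" by (rule AutG_group[OF U])
  have Uc: "U \<subseteq> carrier G" by (rule subgroup.subset[OF U])
  show ?thesis
  proof (rule A.subgroupI)
    show "HomS G U U \<subseteq> carrier (AutG U)" using HomS_F[OF U U] by simp
    have "\<one>\<^bsub>AutG U\<^esub> \<in> HomS G U U" using incl_F[OF U U] unfolding HomS_iff
    proof -
      have "restrict (conjmap G \<one>) U = restrict (\<lambda>x. x) U"
        by (rule restrict_ext) (use conj_one Uc in auto)
      moreover have "\<one> \<in> normalizerS G U" by (rule subgroup.one_closed[OF normS_subgroup[OF U]])
      ultimately show "\<exists>g\<in>carrier G. conjmap G g ` U \<subseteq> U \<and> \<one>\<^bsub>AutG U\<^esub> = restrict (conjmap G g) U"
        unfolding normalizerS_def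
        by (intro bexI[of _ \<one>] conjI) (simp_all)
    qed
    then show "HomS G U U \<noteq> {}" by blast
  next
    fix a assume a: "a \<in> HomS G U U"
    then obtain g where g: "g \<in> carrier G" "conjmap G g ` U \<subseteq> U" "a = restrict (conjmap G g) U"
      unfolding HomS_iff by blast
    have gN: "g \<in> normalizerS G U" using normS_iff[OF U] g by simp
    have igN: "inv g \<in> normalizerS G U" by (rule subgroup.m_inv_closed[OF normS_subgroup[OF U] gN])
    have ig: "conjmap G (inv g) ` U \<subseteq> U" using normS_iff[OF U] igN by simp
    have aF: "a \<in> F U U" using a HomS_F[OF U U] by blast
    have iF: "restrict (conjmap G (inv g)) U \<in> F U U" using conj_F[OF U U inv_closed[OF g(1)] ig] .
    have "restrict (conjmap G (inv g)) U \<otimes>\<^bsub>AutG U\<^esub> a = \<one>\<^bsub>AutG U\<^esub>"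
    proof (simp, rule restrict_ext)
      fix x assume x: "x \<in> U"
      have "conjmap G g x \<in> U" using g(2) x by blast
      then show "(restrict (conjmap G (inv g)) U \<circ> a) x = x"
        using g(3) x conj_inv_cancel[OF g(1)] Uc by auto
    qed
    then have "inv\<^bsub>AutG U\<^esub> a = restrict (conjmap G (inv g)) U"
      using A.inv_equality aF iF by simp
    then show "inv\<^bsub>AutG U\<^esub> a \<in> HomS G U U" unfolding HomS_iff using inv_closed[OF g(1)] ig by blast
  next
    fix a b assume a: "a \<in> HomS G U U" and b: "b \<in> HomS G U U"
    then obtain g h where g: "g \<in> carrier G" "conjmap G g ` U \<subseteq> U" "a = restrict (conjmap G g) U"
      and h: "h \<in> carrier G" "conjmap G h ` U \<subseteq> U" "b = restrict (conjmap G h) U"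
      unfolding HomS_iff by blast
    have gN: "g \<in> normalizerS G U" using normS_iff[OF U] g by simp
    have hN: "h \<in> normalizerS G U" using normS_iff[OF U] h by simp
    have ghN: "g \<otimes> h \<in> normalizerS G U" by (rule subgroup.m_closed[OF normS_subgroup[OF U] gN hN])
    have gh: "conjmap G (g \<otimes> h) ` U \<subseteq> U" using normS_iff[OF U] ghN by simp
    have "a \<otimes>\<^bsub>AutG U\<^esub> b = restrict (conjmap G (g \<otimes> h)) U"
    proof (simp, rule restrict_ext)
      fix x assume x: "x \<in> U"
      have "conjmap G h x \<in> U" using h(2) x by blast
      then show "(a \<circ> b) x = conjmap G (g \<otimes> h) x"
        using g(3) h(3) x conj_comp[OF g(1) h(1)] Uc by auto
    qed
    then show "a \<otimes>\<^bsub>AutG U\<^esub> b \<in> HomS G U U" unfolding HomS_iff using m_closed[OF g(1) h(1)] gh by blast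
  qed
qed

lemma HomS_rcosets_card:
  assumes U: "subgroup U G" and m: "card (F U U) = card (HomS G U U) * m"
  shows "card (rcosets\<^bsub>AutG U\<^esub> (HomS G U U)) = m"
proof -
  interpret A: group "AutG U" by (rule AutG_group[OF U])
  have "card (rcosets\<^bsub>AutG U\<^esub> (HomS G U U)) * card (HomS G U U) = card (F U U)"
    using A.lagrange[OF HomS_subgroup[OF U]] unfolding order_def by simp
  moreover have "card (HomS G U U) > 0"
  proof -
    have "finite (F U U)"
    proof -
      have "F U U \<subseteq> extensional U \<inter> (U \<rightarrow> U)" using F_ext F_map by blast
      moreover have "finite (extensional U \<inter> (U \<rightarrow> U))"
      proof -
        have "extensional U \<inter> (U \<rightarrow> U) = PiE U (\<lambda>_. U)" unfolding PiE_def by blast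
        then show ?thesis using finite_PiE[OF sub_fin[OF U]] sub_fin[OF U] by simp
      qed
      ultimately show ?thesis using finite_subset by blast
    qed
    then have "finite (HomS G U U)" using HomS_F[OF U U] finite_subset by blast
    moreover have "HomS G U U \<noteq> {}" using subgroup.one_closed[OF HomS_subgroup[OF U]] by blast
    ultimately show ?thesis by (simp add: card_gt_0_iff)
  qed
  ultimately show ?thesis using m by (simp add: mult.commute)
qed

end

context sfs begin

lemma sylow_ax: assumes "subgroup U G" "fully_normalized G F U"
  shows "fully_centralized G F U \<and> (\<exists>m. card (F U U) = card (HomS G U U) * m \<and> \<not> p dvd m)"
  using sat assms unfolding saturated_fusion_system_def by blast

lemma ext_ax: assumes "subgroup U G" "\<phi> \<in> F U (carrier G)" "fully_centralized G F (\<phi> ` U)"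
  shows "\<exists>\<psi>\<in>F (N_phi G U \<phi>) (carrier G). \<forall>x\<in>U. \<psi> x = \<phi> x"
proof -
  have "\<forall>P \<phi>. subgroup P G \<and> \<phi> \<in> F P (carrier G) \<and> fully_centralized G F (\<phi> ` P) \<longrightarrow>
        (\<exists>\<psi>\<in>F (N_phi G P \<phi>) (carrier G). \<forall>x\<in>P. \<psi> x = \<phi> x)"
    using sat unfolding saturated_fusion_system_def by (elim conjE)
  then show ?thesis using assms by blast
qed

lemma F_finite: assumes U: "subgroup U G" shows "finite (F U V)"
proof -
  have "F U V \<subseteq> extensional U \<inter> (U \<rightarrow> carrier G)" using F_ext F_carr by blast
  moreover have "finite (extensional U \<inter> (U \<rightarrow> carrier G))"
  proof -
    have "extensional U \<inter> (U \<rightarrow> carrier G) = PiE U (\<lambda>_. carrier G)" unfolding PiE_def by blast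
    then show ?thesis using finite_PiE[OF sub_fin[OF U]] finG by simp
  qed
  ultimately show ?thesis using finite_subset by blast
qed

lemma fn_exists: assumes U: "subgroup U G"
  shows "\<exists>\<beta>\<in>F U (carrier G). fully_normalized G F (\<beta> ` U)"
proof -
  define C where "C = {\<beta> ` U | \<beta>. \<beta> \<in> F U (carrier G)}"
  define f where "f = (\<lambda>V. card (normalizerS G V))"
  have "C \<subseteq> Pow (carrier G)" unfolding C_def using F_imgsub by blast
  then have finC: "finite C" using finG finite_subset by blast
  have "restrict (\<lambda>x. x) U \<in> F U (carrier G)" by (rule incl_F[OF U subgroup_self subgroup.subset[OF U]])
  then have neC: "C \<noteq> {}" unfolding C_def by blast
  define M where "M = Max (f ` C)"
  have "M \<in> f ` C" unfolding M_def using finC neC by simp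
  then obtain V0 where V0: "V0 \<in> C" "f V0 = M" by blast
  obtain \<beta> where \<beta>: "\<beta> \<in> F U (carrier G)" "V0 = \<beta> ` U" using V0(1) unfolding C_def by blast
  have "fully_normalized G F V0" unfolding fully_normalized_def
  proof
    fix \<chi> assume \<chi>: "\<chi> \<in> F V0 (carrier G)"
    have b2: "\<beta> \<in> F U V0" using F_img[OF \<beta>(1)] \<beta>(2) by simp
    have "restrict (\<chi> \<circ> \<beta>) U \<in> F U (carrier G)" by (rule F_comp[OF b2 \<chi>])
    moreover have "restrict (\<chi> \<circ> \<beta>) U ` U = \<chi> ` V0" using \<beta>(2) by auto
    ultimately have "\<chi> ` V0 \<in> C" unfolding C_def by (metis (mono_tags, lifting) mem_Collect_eq)
    then have "f (\<chi> ` V0) \<le> M" unfolding M_def using finC by simp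
    then show "card (normalizerS G (\<chi> ` V0)) \<le> card (normalizerS G V0)" using V0(2) unfolding f_def by simp
  qed
  then show ?thesis using \<beta> by blast
qed

lemma conj_to_fn:
  assumes X': "subgroup X' G" and Xs: "subgroup Xs G" and fn: "fully_normalized G F Xs"
    and \<beta>: "\<beta> \<in> F X' (carrier G)" and \<beta>X: "\<beta> ` X' = Xs"
  shows "\<exists>\<alpha>\<in>F (normalizerS G X') (carrier G). \<alpha> ` X' = Xs \<and> (\<forall>x\<in>X'. \<alpha> x \<in> Xs)"
proof -
  obtain m where m: "card (F Xs Xs) = card (HomS G Xs Xs) * m" "\<not> p dvd m"
    and fc: "fully_centralized G F Xs" using sylow_ax[OF Xs fn] by blast
  define A where "A = AutG Xs"
  interpret A: group A unfolding A_def by (rule AutG_group[OF Xs])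
  have B: "subgroup (HomS G Xs Xs) A" unfolding A_def by (rule HomS_subgroup[OF Xs])
  have cardE: "card (rcosets\<^bsub>A\<^esub> (HomS G Xs Xs)) = m" unfolding A_def by (rule HomS_rcosets_card[OF Xs m(1)])
  have \<beta>1: "\<beta> \<in> F X' Xs" using F_img[OF \<beta>] \<beta>X by simp
  define \<beta>i where "\<beta>i = restrict (inv_into X' \<beta>) Xs"
  have \<beta>i: "\<beta>i \<in> F Xs X'" unfolding \<beta>i_def using F_invm[OF \<beta>1] \<beta>X by simp
  have \<beta>i1: "\<beta>i (\<beta> x) = x" if "x \<in> X'" for x
    unfolding \<beta>i_def using inv_into_F[OF \<beta>1 that] \<beta>X by simp
  have \<beta>i2: "\<beta> (\<beta>i y) = y" if "y \<in> Xs" for y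
    unfolding \<beta>i_def using F_inv_left[OF \<beta>1, of y] \<beta>X that by simp
  define N where "N = normalizerS G X'"
  have NS: "subgroup N G" unfolding N_def by (rule normS_subgroup[OF X'])
  define H where "H = G\<lparr>carrier := N\<rparr>"
  have gH: "group H" unfolding H_def by (rule subgroup_imp_group[OF NS])
  obtain k where k: "card N = p ^ k" using card_sub_ppow[OF NS] by blast
  have oH: "order H = p ^ k" unfolding H_def order_def using k by simp
  have X'c: "X' \<subseteq> carrier G" by (rule subgroup.subset[OF X'])
  have cgX: "conjmap G g ` X' \<subseteq> X'" "g \<in> carrier G" if "g \<in> N" for g
    using that normS_iff[OF X'] unfolding N_def by auto
  define \<psi> where "\<psi> g = restrict (\<lambda>y. \<beta> (conjmap G g (\<beta>i y))) Xs" for g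
  have \<psi>F: "\<psi> g \<in> F Xs Xs" if g: "g \<in> N" for g
  proof -
    have c: "restrict (conjmap G g) X' \<in> F X' X'" by (rule conj_F[OF X' X' cgX(2)[OF g] cgX(1)[OF g]])
    have "restrict (\<beta> \<circ> restrict (restrict (conjmap G g) X' \<circ> \<beta>i) Xs) Xs \<in> F Xs Xs"
      by (rule F_comp[OF F_comp[OF \<beta>i c] \<beta>1])
    moreover have "restrict (\<beta> \<circ> restrict (restrict (conjmap G g) X' \<circ> \<beta>i) Xs) Xs = \<psi> g"
      unfolding \<psi>_def by (rule restrict_ext) (use F_map[OF \<beta>i] in auto)
    ultimately show ?thesis by simp
  qed
  have \<psi>hom: "\<psi> \<in> hom H A"
    unfolding hom_def
  proof (intro CollectI conjI ballI)
    show "\<psi> \<in> carrier H \<rightarrow> carrier A" using \<psi>F unfolding H_def A_def by auto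
    fix g h assume g: "g \<in> carrier H" and h: "h \<in> carrier H"
    have gN: "g \<in> N" and hN: "h \<in> N" using g h unfolding H_def by auto
    have e: "g \<otimes>\<^bsub>H\<^esub> h = g \<otimes> h" unfolding H_def by simp
    have "\<psi> (g \<otimes> h) = restrict (\<psi> g \<circ> \<psi> h) Xs"
      unfolding \<psi>_def[of "g \<otimes> h"]
    proof (rule restrict_ext)
      fix y assume y: "y \<in> Xs"
      have by': "\<beta>i y \<in> X'" by (rule F_map[OF \<beta>i y])
      have byc: "\<beta>i y \<in> carrier G" using by' X'c by blast
      have hy: "conjmap G h (\<beta>i y) \<in> X'" using cgX(1)[OF hN] by' by blast
      have bh: "\<beta> (conjmap G h (\<beta>i y)) \<in> Xs" using F_map[OF \<beta>1 hy] .
      have 1: "\<psi> h y = \<beta> (conjmap G h (\<beta>i y))" unfolding \<psi>_def using y by simp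
      have 2: "\<psi> g (\<psi> h y) = \<beta> (conjmap G g (conjmap G h (\<beta>i y)))"
        unfolding 1 \<psi>_def using bh \<beta>i1[OF hy] y by simp
      show "\<beta> (conjmap G (g \<otimes> h) (\<beta>i y)) = (\<psi> g \<circ> \<psi> h) y"
        using 2 conj_comp[OF cgX(2)[OF gN] cgX(2)[OF hN] byc] by simp
    qed
    then show "\<psi> (g \<otimes>\<^bsub>H\<^esub> h) = \<psi> g \<otimes>\<^bsub>A\<^esub> \<psi> h" unfolding A_def AutG_mult e .
  qed
  have finA: "finite (carrier A)" unfolding A_def using F_finite[OF Xs] by simp
  obtain \<eta> where \<eta>: "\<eta> \<in> carrier A" and \<eta>c: "\<And>g. g \<in> carrier H \<Longrightarrow> \<eta> \<otimes>\<^bsub>A\<^esub> \<psi> g \<otimes>\<^bsub>A\<^esub> inv\<^bsub>A\<^esub> \<eta> \<in> HomS G Xs Xs"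
    using fixed_conj[OF A.is_group finA B _ prp gH oH \<psi>hom] cardE m(2) by auto
  have \<eta>F: "\<eta> \<in> F Xs Xs" using \<eta> unfolding A_def by simp
  have inv\<eta>: "inv\<^bsub>A\<^esub> \<eta> = restrict (inv_into Xs \<eta>) Xs" unfolding A_def by (rule AutG_inv[OF Xs \<eta>F])
  define \<alpha>0 where "\<alpha>0 = restrict (\<eta> \<circ> \<beta>) X'"
  have \<alpha>0F: "\<alpha>0 \<in> F X' Xs" unfolding \<alpha>0_def by (rule F_comp[OF \<beta>1 \<eta>F])
  have \<alpha>0X: "\<alpha>0 ` X' = Xs"
  proof -
    have "\<alpha>0 ` X' = \<eta> ` (\<beta> ` X')" unfolding \<alpha>0_def by auto
    then show ?thesis using \<beta>X F_aut[OF \<eta>F] by simp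
  qed
  have NN: "N \<subseteq> N_phi G X' \<alpha>0"
  proof
    fix g assume gN: "g \<in> N"
    have gH': "g \<in> carrier H" using gN unfolding H_def by simp
    obtain h where h: "h \<in> carrier G" "conjmap G h ` Xs \<subseteq> Xs"
      "\<eta> \<otimes>\<^bsub>A\<^esub> \<psi> g \<otimes>\<^bsub>A\<^esub> inv\<^bsub>A\<^esub> \<eta> = restrict (conjmap G h) Xs"
      using \<eta>c[OF gH'] unfolding HomS_iff by blast
    have "\<alpha>0 (conjmap G g x) = conjmap G h (\<alpha>0 x)" if x: "x \<in> X'" for x
    proof -
      have bx: "\<beta> x \<in> Xs" by (rule F_map[OF \<beta>1 x])
      have ebx: "\<eta> (\<beta> x) \<in> Xs" by (rule F_map[OF \<eta>F bx])
      have gx: "conjmap G g x \<in> X'" using cgX(1)[OF gN] x by blast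
      have "(\<eta> \<otimes>\<^bsub>A\<^esub> \<psi> g \<otimes>\<^bsub>A\<^esub> inv\<^bsub>A\<^esub> \<eta>) (\<eta> (\<beta> x)) = \<eta> (\<psi> g (\<beta> x))"
        unfolding A_def AutG_mult inv\<eta>[unfolded A_def] using ebx bx AutG_inv_app1[OF \<eta>F bx] by simp
      also have "\<psi> g (\<beta> x) = \<beta> (conjmap G g x)" unfolding \<psi>_def using bx \<beta>i1[OF x] by simp
      finally have "conjmap G h (\<eta> (\<beta> x)) = \<eta> (\<beta> (conjmap G g x))" using h(3) ebx by simp
      then show ?thesis unfolding \<alpha>0_def using x gx by simp
    qed
    then show "g \<in> N_phi G X' \<alpha>0" unfolding N_phi_def using gN h(1) unfolding N_def by blast
  qed
  have Neq: "N_phi G X' \<alpha>0 = N" using NN unfolding N_phi_def N_def by blast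
  have \<alpha>0S: "\<alpha>0 \<in> F X' (carrier G)" by (rule F_toS[OF \<alpha>0F])
  obtain \<alpha> where \<alpha>: "\<alpha> \<in> F (N_phi G X' \<alpha>0) (carrier G)" "\<forall>x\<in>X'. \<alpha> x = \<alpha>0 x"
    using ext_ax[OF X' \<alpha>0S] fc \<alpha>0X by auto
  have "\<alpha> ` X' = \<alpha>0 ` X'" by (rule image_cong[OF refl]) (use \<alpha>(2) in simp)
  then have "\<alpha> ` X' = Xs" using \<alpha>0X by simp
  moreover have "\<forall>x\<in>X'. \<alpha> x \<in> Xs"
  proof
    fix x assume x: "x \<in> X'"
    show "\<alpha> x \<in> Xs" using \<alpha>(2) x F_map[OF \<alpha>0F x] by simp
  qed
  moreover have "\<alpha> \<in> F (normalizerS G X') (carrier G)" using \<alpha>(1) Neq unfolding N_def by simp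
  ultimately show ?thesis by blast
qed

end

context sfs begin

definition ZR :: "'a set \<Rightarrow> 'a set \<Rightarrow> ('a \<Rightarrow> 'a) monoid" where
  "ZR R Z = \<lparr>carrier = PiE R (\<lambda>_. Z), monoid.mult = (\<lambda>f g. \<lambda>y\<in>R. f y \<otimes> g y), one = (\<lambda>y\<in>R. \<one>)\<rparr>"

lemma ZR_group: assumes Z: "subgroup Z G" shows "group (ZR R Z)"
proof -
  have Zc: "\<And>z. z \<in> Z \<Longrightarrow> z \<in> carrier G" using subgroup.mem_carrier[OF Z] by blast
  show ?thesis
  proof (rule groupI)
    fix f g assume "f \<in> carrier (ZR R Z)" "g \<in> carrier (ZR R Z)"
    then show "f \<otimes>\<^bsub>ZR R Z\<^esub> g \<in> carrier (ZR R Z)"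
      unfolding ZR_def by (auto simp: PiE_iff intro: subgroup.m_closed[OF Z])
  next
    show "\<one>\<^bsub>ZR R Z\<^esub> \<in> carrier (ZR R Z)" unfolding ZR_def using subgroup.one_closed[OF Z] by auto
  next
    fix f g h assume f: "f \<in> carrier (ZR R Z)" and g: "g \<in> carrier (ZR R Z)" and h: "h \<in> carrier (ZR R Z)"
    show "f \<otimes>\<^bsub>ZR R Z\<^esub> g \<otimes>\<^bsub>ZR R Z\<^esub> h = f \<otimes>\<^bsub>ZR R Z\<^esub> (g \<otimes>\<^bsub>ZR R Z\<^esub> h)"
      unfolding ZR_def
    proof (simp, rule restrict_ext)
      fix y assume y: "y \<in> R"
      have "f y \<in> carrier G" "g y \<in> carrier G" "h y \<in> carrier G"
        using f g h y Zc unfolding ZR_def by (auto simp: PiE_iff)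
      then show "(if y \<in> R then f y \<otimes> g y else undefined) \<otimes> h y = f y \<otimes> (if y \<in> R then g y \<otimes> h y else undefined)"
        using y by (simp add: m_assoc)
    qed
  next
    fix f assume f: "f \<in> carrier (ZR R Z)"
    have fe: "f \<in> extensional R" using f unfolding ZR_def by (simp add: PiE_iff)
    have fc: "\<And>y. y \<in> R \<Longrightarrow> f y \<in> carrier G" using f Zc unfolding ZR_def by (auto simp: PiE_iff)
    show "\<one>\<^bsub>ZR R Z\<^esub> \<otimes>\<^bsub>ZR R Z\<^esub> f = f"
      unfolding ZR_def
    proof (simp, rule extensionalityI[OF _ fe])
      show "(\<lambda>y\<in>R. (if y \<in> R then \<one> else undefined) \<otimes> f y) \<in> extensional R" by simp
      fix y assume "y \<in> R" then show "(\<lambda>y\<in>R. (if y \<in> R then \<one> else undefined) \<otimes> f y) y = f y"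
        using fc by simp
    qed
    have "(\<lambda>y\<in>R. inv (f y)) \<in> carrier (ZR R Z)"
      using f unfolding ZR_def by (auto simp: PiE_iff intro: subgroup.m_inv_closed[OF Z])
    moreover have "(\<lambda>y\<in>R. inv (f y)) \<otimes>\<^bsub>ZR R Z\<^esub> f = \<one>\<^bsub>ZR R Z\<^esub>"
      unfolding ZR_def by (simp, rule restrict_ext) (use fc in simp)
    ultimately show "\<exists>g\<in>carrier (ZR R Z). g \<otimes>\<^bsub>ZR R Z\<^esub> f = \<one>\<^bsub>ZR R Z\<^esub>" by blast
  qed
qed

lemma ZR_order: assumes R: "subgroup R G" shows "order (ZR R Z) = card Z ^ card R"
  unfolding ZR_def order_def using card_PiE[OF sub_fin[OF R], of "\<lambda>_. Z"] by simp

lemma KL: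
  assumes R: "subgroup R G" and fn: "fully_normalized G F R"
    and Z: "subgroup Z G" and ZR': "Z \<subseteq> R"
    and inv: "\<And>\<eta>. \<eta> \<in> F R R \<Longrightarrow> \<eta> ` Z \<subseteq> Z"
    and \<delta>0: "\<delta>0 \<in> F R R" and fixZ: "\<And>z. z \<in> Z \<Longrightarrow> \<delta>0 z = z"
    and modZ: "\<And>y. y \<in> R \<Longrightarrow> inv y \<otimes> \<delta>0 y \<in> Z"
  shows "\<delta>0 \<in> HomS G R R"
proof -
  obtain m where m: "card (F R R) = card (HomS G R R) * m" "\<not> p dvd m"
    using sylow_ax[OF R fn] by blast
  define A where "A = AutG R"
  interpret A: group A unfolding A_def by (rule AutG_group[OF R])
  have B: "subgroup (HomS G R R) A" unfolding A_def by (rule HomS_subgroup[OF R])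
  have cardE: "card (rcosets\<^bsub>A\<^esub> (HomS G R R)) = m" unfolding A_def by (rule HomS_rcosets_card[OF R m(1)])
  have finA: "finite (carrier A)" unfolding A_def using F_finite[OF R] by simp
  have Rc: "\<And>y. y \<in> R \<Longrightarrow> y \<in> carrier G" using subgroup.mem_carrier[OF R] by blast
  have Zc: "\<And>z. z \<in> Z \<Longrightarrow> z \<in> carrier G" using subgroup.mem_carrier[OF Z] by blast
  define K where "K = {\<delta> \<in> F R R. (\<forall>z\<in>Z. \<delta> z = z) \<and> (\<forall>y\<in>R. inv y \<otimes> \<delta> y \<in> Z)}"
  have Kmem: "\<delta> \<in> K \<longleftrightarrow> \<delta> \<in> F R R \<and> (\<forall>z\<in>Z. \<delta> z = z) \<and> (\<forall>y\<in>R. inv y \<otimes> \<delta> y \<in> Z)" for \<delta>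
    unfolding K_def by blast
  have invA: "inv\<^bsub>A\<^esub> \<eta> = restrict (inv_into R \<eta>) R" if "\<eta> \<in> F R R" for \<eta>
    unfolding A_def by (rule AutG_inv[OF R that])
  have mulA: "\<And>f g. f \<otimes>\<^bsub>A\<^esub> g = restrict (f \<circ> g) R" unfolding A_def by simp
  have Kconj: "\<eta> \<otimes>\<^bsub>A\<^esub> \<delta> \<otimes>\<^bsub>A\<^esub> inv\<^bsub>A\<^esub> \<eta> \<in> K" if \<eta>: "\<eta> \<in> F R R" and \<delta>: "\<delta> \<in> K" for \<eta> \<delta>
  proof -
    have \<delta>F: "\<delta> \<in> F R R" using \<delta> Kmem by blast
    have iF: "restrict (inv_into R \<eta>) R \<in> F R R" by (rule AutG_inv_F[OF R \<eta>])
    have val: "(\<eta> \<otimes>\<^bsub>A\<^esub> \<delta> \<otimes>\<^bsub>A\<^esub> inv\<^bsub>A\<^esub> \<eta>) y = \<eta> (\<delta> (restrict (inv_into R \<eta>) R y))" if y: "y \<in> R" for y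
      unfolding mulA invA[OF \<eta>] using y F_map[OF iF y] by simp
    have inF: "\<eta> \<otimes>\<^bsub>A\<^esub> \<delta> \<otimes>\<^bsub>A\<^esub> inv\<^bsub>A\<^esub> \<eta> \<in> F R R"
      using A.m_closed[OF A.m_closed[of \<eta> \<delta>] A.inv_closed[of \<eta>]] \<eta> \<delta>F unfolding A_def by simp
    show ?thesis unfolding Kmem
    proof (intro conjI ballI inF)
      fix z assume z: "z \<in> Z"
      have zR: "z \<in> R" using z ZR' by blast
      have "restrict (inv_into R \<eta>) R z \<in> Z" using inv[OF iF] z by blast
      then have "\<delta> (restrict (inv_into R \<eta>) R z) = restrict (inv_into R \<eta>) R z" using \<delta> Kmem by blast
      then show "(\<eta> \<otimes>\<^bsub>A\<^esub> \<delta> \<otimes>\<^bsub>A\<^esub> inv\<^bsub>A\<^esub> \<eta>) z = z" using val[OF zR] AutG_inv_app2[OF \<eta> zR] by simp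
    next
      fix y assume y: "y \<in> R"
      define x where "x = restrict (inv_into R \<eta>) R y"
      have x: "x \<in> R" unfolding x_def by (rule F_map[OF iF y])
      have ex: "\<eta> x = y" unfolding x_def by (rule AutG_inv_app2[OF \<eta> y])
      define w where "w = inv x \<otimes> \<delta> x"
      have w: "w \<in> Z" unfolding w_def using \<delta> Kmem x by blast
      have dx: "\<delta> x = x \<otimes> w" unfolding w_def using Rc[OF x] F_carr[OF \<delta>F x] by simp
      have "\<eta> (\<delta> x) = y \<otimes> \<eta> w" using dx F_mult[OF \<eta> x] ZR' w ex by auto
      moreover have "\<eta> w \<in> Z" using inv[OF \<eta>] w by blast
      ultimately have "inv y \<otimes> \<eta> (\<delta> x) \<in> Z" using Rc[OF y] Zc by simp
      then show "inv y \<otimes> (\<eta> \<otimes>\<^bsub>A\<^esub> \<delta> \<otimes>\<^bsub>A\<^esub> inv\<^bsub>A\<^esub> \<eta>) y \<in> Z" using val[OF y] unfolding x_def by simp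
    qed
  qed
  have Ksub: "subgroup K A"
  proof (rule A.subgroupI)
    show "K \<subseteq> carrier A" unfolding A_def K_def by auto
    have "restrict (\<lambda>x. x) R \<in> K" unfolding Kmem using incl_F[OF R R] ZR' Rc subgroup.one_closed[OF Z] by auto
    then show "K \<noteq> {}" by blast
  next
    fix \<delta> assume \<delta>: "\<delta> \<in> K"
    have \<delta>F: "\<delta> \<in> F R R" using \<delta> Kmem by blast
    have iF: "restrict (inv_into R \<delta>) R \<in> F R R" by (rule AutG_inv_F[OF R \<delta>F])
    show "inv\<^bsub>A\<^esub> \<delta> \<in> K" unfolding invA[OF \<delta>F] Kmem
    proof (intro conjI ballI iF)
      fix z assume z: "z \<in> Z"
      have zR: "z \<in> R" using z ZR' by blast
      have "\<delta> z = z" using \<delta> Kmem z by blast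
      then show "restrict (inv_into R \<delta>) R z = z" using AutG_inv_app1[OF \<delta>F zR] by simp
    next
      fix y assume y: "y \<in> R"
      define x where "x = restrict (inv_into R \<delta>) R y"
      have x: "x \<in> R" unfolding x_def by (rule F_map[OF iF y])
      have ex: "\<delta> x = y" unfolding x_def by (rule AutG_inv_app2[OF \<delta>F y])
      have w: "inv x \<otimes> \<delta> x \<in> Z" using \<delta> Kmem x by blast
      have "inv (inv x \<otimes> \<delta> x) = inv y \<otimes> x" using ex Rc[OF x] Rc[OF y] by (simp add: inv_mult_group)
      then show "inv y \<otimes> restrict (inv_into R \<delta>) R y \<in> Z"
        using subgroup.m_inv_closed[OF Z w] unfolding x_def by simp
    qed
  next
    fix \<delta> \<epsilon> assume \<delta>: "\<delta> \<in> K" and \<epsilon>: "\<epsilon> \<in> K"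
    have \<delta>F: "\<delta> \<in> F R R" and \<epsilon>F: "\<epsilon> \<in> F R R" using \<delta> \<epsilon> Kmem by auto
    show "\<delta> \<otimes>\<^bsub>A\<^esub> \<epsilon> \<in> K" unfolding Kmem mulA
    proof (intro conjI ballI)
      show "restrict (\<delta> \<circ> \<epsilon>) R \<in> F R R" by (rule F_comp[OF \<epsilon>F \<delta>F])
    next
      fix z assume z: "z \<in> Z"
      then show "restrict (\<delta> \<circ> \<epsilon>) R z = z" using \<delta> \<epsilon> Kmem ZR' by auto
    next
      fix y assume y: "y \<in> R"
      have ey: "\<epsilon> y \<in> R" by (rule F_map[OF \<epsilon>F y])
      have 1: "inv y \<otimes> \<epsilon> y \<in> Z" and 2: "inv (\<epsilon> y) \<otimes> \<delta> (\<epsilon> y) \<in> Z" using \<delta> \<epsilon> Kmem y ey by auto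
      have "inv y \<otimes> \<delta> (\<epsilon> y) = (inv y \<otimes> \<epsilon> y) \<otimes> (inv (\<epsilon> y) \<otimes> \<delta> (\<epsilon> y))"
        using Rc[OF y] Rc[OF ey] F_carr[OF \<delta>F ey] by (simp add: m_assoc)
      then show "inv y \<otimes> restrict (\<delta> \<circ> \<epsilon>) R y \<in> Z" using subgroup.m_closed[OF Z 1 2] y by simp
    qed
  qed
  define KG where "KG = A\<lparr>carrier := K\<rparr>"
  have gKG: "group KG" unfolding KG_def by (rule A.subgroup_imp_group[OF Ksub])
  define zf where "zf = (\<lambda>\<delta>. \<lambda>y\<in>R. inv y \<otimes> \<delta> y)"
  have gZR: "group (ZR R Z)" by (rule ZR_group[OF Z])
  have zfhom: "group_hom KG (ZR R Z) zf"
  proof (rule group_hom.intro[OF gKG gZR])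
    show "group_hom_axioms KG (ZR R Z) zf" unfolding group_hom_axioms_def hom_def
    proof (intro CollectI conjI ballI)
      show "zf \<in> carrier KG \<rightarrow> carrier (ZR R Z)" unfolding KG_def ZR_def zf_def using Kmem by auto
      fix \<delta> \<epsilon> assume \<delta>: "\<delta> \<in> carrier KG" and \<epsilon>: "\<epsilon> \<in> carrier KG"
      have \<delta>K: "\<delta> \<in> K" and \<epsilon>K: "\<epsilon> \<in> K" using \<delta> \<epsilon> unfolding KG_def by auto
      have \<delta>F: "\<delta> \<in> F R R" and \<epsilon>F: "\<epsilon> \<in> F R R" using \<delta>K \<epsilon>K Kmem by auto
      have e1: "\<delta> \<otimes>\<^bsub>KG\<^esub> \<epsilon> = restrict (\<delta> \<circ> \<epsilon>) R" unfolding KG_def by (simp add: mulA)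
      have e2: "zf \<delta> \<otimes>\<^bsub>ZR R Z\<^esub> zf \<epsilon> = (\<lambda>y\<in>R. zf \<delta> y \<otimes> zf \<epsilon> y)" unfolding ZR_def by simp
      have "zf (restrict (\<delta> \<circ> \<epsilon>) R) = (\<lambda>y\<in>R. zf \<delta> y \<otimes> zf \<epsilon> y)"
        unfolding zf_def
      proof (rule restrict_ext)
        fix y assume y: "y \<in> R"
        have w: "inv y \<otimes> \<epsilon> y \<in> Z" using \<epsilon>K Kmem y by blast
        have ey: "\<epsilon> y = y \<otimes> (inv y \<otimes> \<epsilon> y)" using Rc[OF y] F_carr[OF \<epsilon>F y] by simp
        have "\<delta> (\<epsilon> y) = \<delta> y \<otimes> (inv y \<otimes> \<epsilon> y)"
          using F_mult[OF \<delta>F y, of "inv y \<otimes> \<epsilon> y"] w ZR' ey \<delta>K Kmem by auto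
        then show "inv y \<otimes> restrict (\<delta> \<circ> \<epsilon>) R y = (\<lambda>y\<in>R. inv y \<otimes> \<delta> y) y \<otimes> (\<lambda>y\<in>R. inv y \<otimes> \<epsilon> y) y"
          using y Rc[OF y] F_carr[OF \<delta>F y] F_carr[OF \<epsilon>F y] by (simp add: m_assoc)
      qed
      then show "zf (\<delta> \<otimes>\<^bsub>KG\<^esub> \<epsilon>) = zf \<delta> \<otimes>\<^bsub>ZR R Z\<^esub> zf \<epsilon>" using e1 e2 by simp
    qed
  qed
  have zfinj: "inj_on zf K"
  proof (rule inj_onI)
    fix \<delta> \<epsilon> assume \<delta>: "\<delta> \<in> K" and \<epsilon>: "\<epsilon> \<in> K" and eq: "zf \<delta> = zf \<epsilon>"
    have \<delta>F: "\<delta> \<in> F R R" and \<epsilon>F: "\<epsilon> \<in> F R R" using \<delta> \<epsilon> Kmem by auto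
    show "\<delta> = \<epsilon>"
    proof (rule extensionalityI[OF F_ext[OF \<delta>F] F_ext[OF \<epsilon>F]])
      fix y assume y: "y \<in> R"
      have "inv y \<otimes> \<delta> y = inv y \<otimes> \<epsilon> y" using fun_cong[OF eq, of y] y unfolding zf_def by simp
      then show "\<delta> y = \<epsilon> y" using Rc[OF y] F_carr[OF \<delta>F y] F_carr[OF \<epsilon>F y] l_cancel inv_closed by blast
    qed
  qed
  obtain b where b: "card Z = p ^ b" using card_sub_ppow[OF Z] by blast
  have "subgroup (zf ` carrier KG) (ZR R Z)" by (rule group_hom.img_is_subgroup[OF zfhom])
  then have "card (zf ` K) dvd order (ZR R Z)"
    using group.lagrange[OF gZR] unfolding KG_def by (metis dvd_triv_right partial_object.select_convs(1) partial_object.surjective partial_object.update_convs(1))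
  then have "card K dvd p ^ (b * card R)" using ZR_order[OF R, of Z] b card_image[OF zfinj]
    by (simp add: power_mult)
  then obtain j where j: "card K = p ^ j" using divides_primepow_nat[OF prp] by blast
  have oKG: "order KG = p ^ j" unfolding KG_def order_def using j by simp
  have idhom: "(\<lambda>x. x) \<in> hom KG A" unfolding hom_def KG_def using Ksub subgroup.subset by auto
  obtain \<eta> where \<eta>: "\<eta> \<in> carrier A" and \<eta>c: "\<And>\<delta>. \<delta> \<in> carrier KG \<Longrightarrow> \<eta> \<otimes>\<^bsub>A\<^esub> \<delta> \<otimes>\<^bsub>A\<^esub> inv\<^bsub>A\<^esub> \<eta> \<in> HomS G R R"
    using fixed_conj[OF A.is_group finA B _ prp gKG oKG idhom] cardE m(2) by auto
  have \<eta>F: "\<eta> \<in> F R R" using \<eta> unfolding A_def by simp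
  have i\<eta>: "inv\<^bsub>A\<^esub> \<eta> \<in> F R R" using A.inv_closed[OF \<eta>] unfolding A_def by simp
  have \<delta>0K: "\<delta>0 \<in> K" unfolding Kmem using \<delta>0 fixZ modZ by blast
  have "inv\<^bsub>A\<^esub> \<eta> \<otimes>\<^bsub>A\<^esub> \<delta>0 \<otimes>\<^bsub>A\<^esub> inv\<^bsub>A\<^esub> (inv\<^bsub>A\<^esub> \<eta>) \<in> K" by (rule Kconj[OF i\<eta> \<delta>0K])
  then have "\<eta> \<otimes>\<^bsub>A\<^esub> (inv\<^bsub>A\<^esub> \<eta> \<otimes>\<^bsub>A\<^esub> \<delta>0 \<otimes>\<^bsub>A\<^esub> inv\<^bsub>A\<^esub> (inv\<^bsub>A\<^esub> \<eta>)) \<otimes>\<^bsub>A\<^esub> inv\<^bsub>A\<^esub> \<eta> \<in> HomS G R R"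
    using \<eta>c unfolding KG_def by simp
  moreover have "\<eta> \<otimes>\<^bsub>A\<^esub> (inv\<^bsub>A\<^esub> \<eta> \<otimes>\<^bsub>A\<^esub> \<delta>0 \<otimes>\<^bsub>A\<^esub> inv\<^bsub>A\<^esub> (inv\<^bsub>A\<^esub> \<eta>)) \<otimes>\<^bsub>A\<^esub> inv\<^bsub>A\<^esub> \<eta> = \<delta>0"
  proof -
    have d: "\<delta>0 \<in> carrier A" using \<delta>0 unfolding A_def by simp
    show ?thesis using \<eta> d by (simp add: A.m_assoc[symmetric]) (simp add: A.m_assoc)
  qed
  ultimately show ?thesis by simp
qed

end

locale lctx = sfs +
  fixes P Q :: "'a set"
  assumes PS: "subgroup P G" and QS: "subgroup Q G" and PQ: "P \<subseteq> Q"
    and Pn: "fusion_normal G F P"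
    and Qn: "fusion_normal (G Mod P) (fusion_quotient G F P) ((\<lambda>q. P #> q) ` Q)"
    and cases: "(\<forall>x\<in>Q. \<forall>y\<in>Q. x \<otimes> y = y \<otimes> x) \<or> P \<subseteq> fusion_center G F"
begin

lemma Pext: assumes "\<phi> \<in> F U V"
  shows "\<exists>A B \<psi>. U \<subseteq> A \<and> P \<subseteq> A \<and> \<psi> \<in> F A B \<and> (\<forall>x\<in>U. \<psi> x = \<phi> x) \<and> \<psi> ` P = P"
proof -
  have "\<forall>P' R \<phi>. \<phi> \<in> F P' R \<longrightarrow>
        (\<exists>A B \<psi>. P' \<subseteq> A \<and> P \<subseteq> A \<and> \<psi> \<in> F A B \<and> (\<forall>x\<in>P'. \<psi> x = \<phi> x) \<and> \<psi> ` P = P)"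
    using Pn unfolding fusion_normal_def by (rule conjunct2)
  then show ?thesis using assms by blast
qed

lemma Pinv: assumes "\<phi> \<in> F U V" "P \<subseteq> U" shows "\<phi> ` P = P"
proof -
  obtain A B \<psi> where "U \<subseteq> A" "\<psi> \<in> F A B" "\<forall>x\<in>U. \<psi> x = \<phi> x" "\<psi> ` P = P"
    using Pext[OF assms(1)] by blast
  then show ?thesis using assms(2) by (metis image_cong subsetD)
qed

lemma Pc: "x \<in> P \<Longrightarrow> x \<in> carrier G" using subgroup.mem_carrier[OF PS] by blast
lemma Qc: "x \<in> Q \<Longrightarrow> x \<in> carrier G" using subgroup.mem_carrier[OF QS] by blast

lemma P_conj: assumes g: "g \<in> carrier G" and x: "x \<in> P" shows "conjmap G g x \<in> P"
proof -
  have "conjmap G g ` P \<subseteq> carrier G" using conj_carr[OF g] Pc by blast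
  then have c: "restrict (conjmap G g) P \<in> F P (carrier G)" by (rule conj_F[OF PS subgroup_self g])
  have "restrict (conjmap G g) P ` P = P" by (rule Pinv[OF c subset_refl])
  then show ?thesis using x by force
qed

lemma P_normal: "P \<lhd> G"
  by (rule normal_invI[OF PS]) (use P_conj in \<open>unfold conjmap_def, blast\<close>)

definition cos :: "'a \<Rightarrow> 'a set" where "cos r = P #> r"

lemma cos_mem: assumes U: "subgroup U G" "P \<subseteq> U" and x: "x \<in> carrier G" and xc: "cos x \<in> cos ` U"
  shows "x \<in> U"
proof -
  obtain r where r: "r \<in> U" "P #> x = P #> r" using xc unfolding cos_def by blast
  have "x \<in> P #> r" using rcos_self[OF x PS] r(2) by simp
  then obtain q where "q \<in> P" "x = q \<otimes> r" unfolding r_coset_def by blast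
  then show ?thesis using r(1) U subgroup.m_closed[OF U(1)] by blast
qed

lemma cos_eq_iff: assumes "x \<in> carrier G" "y \<in> carrier G"
  shows "cos x = cos y \<longleftrightarrow> x \<otimes> inv y \<in> P"
proof
  assume "cos x = cos y"
  then have "x \<in> P #> y" using rcos_self[OF assms(1) PS] unfolding cos_def by simp
  then show "x \<otimes> inv y \<in> P" using subgroup.rcos_module_imp[OF PS is_group assms(2)] by blast
next
  assume "x \<otimes> inv y \<in> P"
  then have "x \<in> P #> y" using subgroup.rcos_module_rev[OF PS is_group assms(2) assms(1)] by blast
  then show "cos x = cos y" unfolding cos_def using repr_independence[OF _ assms(2) PS] by simp
qed

lemma induced:
  assumes \<phi>: "\<phi> \<in> F U V" and PU: "P \<subseteq> U" and \<phi>P: "\<phi> ` P = P"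
  shows "\<exists>\<psi>. \<psi> \<in> fusion_quotient G F P (cos ` U) (cos ` V) \<and> (\<forall>r\<in>U. \<psi> (cos r) = cos (\<phi> r))"
proof -
  have U: "subgroup U G" using F_sub[OF \<phi>] by blast
  have PV: "P \<subseteq> V" using \<phi>P F_imgsub[OF \<phi>] PU by blast
  define \<psi> where "\<psi> = restrict (\<lambda>C. cos (\<phi> (SOME r. r \<in> U \<and> C = cos r))) (cos ` U)"
  have wd: "cos (\<phi> r) = cos (\<phi> r')" if r: "r \<in> U" "r' \<in> U" "cos r = cos r'" for r r'
  proof -
    have rc: "r \<in> carrier G" "r' \<in> carrier G" using r subgroup.mem_carrier[OF U] by auto
    have "r \<otimes> inv r' \<in> P" using cos_eq_iff[OF rc] r(3) by simp
    then have "\<phi> (r \<otimes> inv r') \<in> P" using \<phi>P by blast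
    moreover have "\<phi> (r \<otimes> inv r') = \<phi> r \<otimes> inv (\<phi> r')"
      using F_mult[OF \<phi> r(1) subgroup.m_inv_closed[OF U r(2)]] F_inv[OF \<phi> r(2)] by simp
    ultimately show ?thesis using cos_eq_iff[OF F_carr[OF \<phi> r(1)] F_carr[OF \<phi> r(2)]] by simp
  qed
  have val: "\<psi> (cos r) = cos (\<phi> r)" if r: "r \<in> U" for r
  proof -
    have ex: "\<exists>r'. r' \<in> U \<and> cos r = cos r'" using r by blast
    define s where "s = (SOME r'. r' \<in> U \<and> cos r = cos r')"
    have s: "s \<in> U \<and> cos r = cos s" unfolding s_def by (rule someI_ex[OF ex])
    have cU: "cos r \<in> cos ` U" using r by blast
    have "\<psi> (cos r) = cos (\<phi> s)" unfolding \<psi>_def s_def using cU by (simp only: restrict_apply')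
    also have "\<dots> = cos (\<phi> r)" using wd[OF r] s by metis
    finally show ?thesis .
  qed
  have cfun: "cos = (\<lambda>r. P #> r)" unfolding cos_def by (rule ext) simp
  have ext: "\<psi> \<in> extensional (cos ` U)" unfolding \<psi>_def by simp
  have val': "\<forall>r\<in>U. \<psi> (P #> r) = P #> \<phi> r" using val unfolding cos_def by simp
  have "\<psi> \<in> fusion_quotient G F P (cos ` U) (cos ` V)"
    unfolding fusion_quotient_def mem_Collect_eq
    apply (rule exI[of _ U], rule exI[of _ V], rule exI[of _ \<phi>])
    using PU PV \<phi> \<phi>P ext val' unfolding cfun by simp
  then show ?thesis using val by blast
qed

lemma Qquot: assumes "\<psi> \<in> fusion_quotient G F P U V"
  shows "\<exists>A B \<chi>. U \<subseteq> A \<and> cos ` Q \<subseteq> A \<and> \<chi> \<in> fusion_quotient G F P A B \<and> (\<forall>x\<in>U. \<chi> x = \<psi> x) \<and> \<chi> ` (cos ` Q) = cos ` Q"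
proof -
  have "\<forall>P' R \<phi>. \<phi> \<in> fusion_quotient G F P P' R \<longrightarrow>
        (\<exists>A B \<psi>. P' \<subseteq> A \<and> (\<lambda>q. P #> q) ` Q \<subseteq> A \<and> \<psi> \<in> fusion_quotient G F P A B \<and> (\<forall>x\<in>P'. \<psi> x = \<phi> x) \<and> \<psi> ` ((\<lambda>q. P #> q) ` Q) = (\<lambda>q. P #> q) ` Q)"
    using Qn unfolding fusion_normal_def by (rule conjunct2)
  note H = this[rule_format, OF assms]
  have eq: "(\<lambda>q. P #> q) = cos" unfolding cos_def by (rule ext) simp
  show ?thesis using H unfolding eq .
qed

lemma SC: assumes \<phi>: "\<phi> \<in> F U V" and x: "x \<in> U" and xQ: "x \<in> Q" shows "\<phi> x \<in> Q"
proof -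
  obtain A1 B1 \<phi>1 where A1: "U \<subseteq> A1" "P \<subseteq> A1" "\<phi>1 \<in> F A1 B1" "\<forall>x\<in>U. \<phi>1 x = \<phi> x" "\<phi>1 ` P = P"
    using Pext[OF \<phi>] by blast
  note XX = induced[OF A1(3) A1(2) A1(5)]
  obtain \<psi>0 where
    \<psi>0': "\<psi>0 \<in> fusion_quotient G F P (cos ` A1) (cos ` B1) \<and> (\<forall>r\<in>A1. \<psi>0 (cos r) = cos (\<phi>1 r))"
    using XX by blast
  note \<psi>0 = conjunct1[OF \<psi>0'] conjunct2[OF \<psi>0']
  from Qquot[OF \<psi>0(1)] obtain A B \<chi> where \<chi>': "cos ` A1 \<subseteq> A \<and> cos ` Q \<subseteq> A \<and> \<chi> \<in> fusion_quotient G F P A B \<and> (\<forall>y\<in>cos ` A1. \<chi> y = \<psi>0 y) \<and>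
    \<chi> ` (cos ` Q) = cos ` Q"
    by (elim exE) (erule that)
  have \<chi>: "cos ` A1 \<subseteq> A" "\<chi> \<in> fusion_quotient G F P A B" "\<forall>y\<in>cos ` A1. \<chi> y = \<psi>0 y"
    "\<chi> ` (cos ` Q) = cos ` Q" using \<chi>' by simp_all
  have xA1: "x \<in> A1" using x A1(1) by blast
  have "cos (\<phi> x) = \<chi> (cos x)" using \<chi>(3) \<psi>0(2) xA1 A1(4) x by simp
  also have "\<dots> \<in> cos ` Q" using \<chi>(4) xQ by blast
  finally obtain q where q: "q \<in> Q" "cos (\<phi> x) = cos q" by blast
  have "\<phi> x \<otimes> inv q \<in> P" using cos_eq_iff[OF F_carr[OF \<phi> x] Qc[OF q(1)]] q(2) by simp
  then have "\<phi> x \<otimes> inv q \<otimes> q \<in> Q" using PQ subgroup.m_closed[OF QS _ q(1)] by blast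
  then show ?thesis using F_carr[OF \<phi> x] Qc[OF q(1)] by (simp add: m_assoc)
qed

lemma Q_conj: assumes g: "g \<in> carrier G" and x: "x \<in> Q" shows "conjmap G g x \<in> Q"
proof -
  have "conjmap G g ` Q \<subseteq> carrier G" using conj_carr[OF g] Qc by blast
  then have c: "restrict (conjmap G g) Q \<in> F Q (carrier G)" by (rule conj_F[OF QS subgroup_self g])
  show ?thesis using SC[OF c x x] x by simp
qed

lemma Q_normal: "Q \<lhd> G"
  by (rule normal_invI[OF QS]) (use Q_conj in \<open>unfold conjmap_def, blast\<close>)

lemma QF: assumes \<phi>: "\<phi> \<in> F U V" and QU: "Q \<subseteq> U" shows "\<phi> ` Q = Q"
proof (rule F_auto_img_eq[OF \<phi> QU])
  show "\<phi> ` Q \<subseteq> Q" using SC[OF \<phi>] QU by blast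
qed

lemma central_fix: assumes PZ: "P \<subseteq> fusion_center G F" and \<phi>: "\<phi> \<in> F U V" and x: "x \<in> P" "x \<in> U"
  shows "\<phi> x = x"
proof -
  obtain Z where Z: "fusion_central G F Z" "x \<in> Z" using PZ x(1) unfolding fusion_center_def by blast
  have "\<forall>P' R \<phi>. \<phi> \<in> F P' R \<longrightarrow>
        (\<exists>A B \<psi>. P' \<subseteq> A \<and> Z \<subseteq> A \<and> \<psi> \<in> F A B \<and> (\<forall>x\<in>P'. \<psi> x = \<phi> x) \<and> (\<forall>x\<in>Z. \<psi> x = x))"
    using Z(1) unfolding fusion_central_def by (rule conjunct2)
  then obtain A B \<psi> where "\<forall>x\<in>U. \<psi> x = \<phi> x" "\<forall>x\<in>Z. \<psi> x = x" using \<phi> by blast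
  then show ?thesis using x(2) Z(2) by metis
qed

end

context lctx begin

lemma gamma_setup:
  assumes R: "subgroup R G" and \<gamma>: "\<gamma> \<in> F R R" and gc: "g \<in> carrier G" and cgR: "conjmap G g ` R \<subseteq> R"
  shows "restrict (\<gamma> \<circ> restrict (restrict (conjmap G g) R \<circ> restrict (inv_into R \<gamma>) R) R) R \<in> F R R"
    and "\<And>y. y \<in> R \<Longrightarrow> restrict (\<gamma> \<circ> restrict (restrict (conjmap G g) R \<circ> restrict (inv_into R \<gamma>) R) R) R y
          = \<gamma> (conjmap G g (restrict (inv_into R \<gamma>) R y))"
proof -
  have \<gamma>iF: "restrict (inv_into R \<gamma>) R \<in> F R R" by (rule AutG_inv_F[OF R \<gamma>])
  have cgF: "restrict (conjmap G g) R \<in> F R R" by (rule conj_F[OF R R gc cgR])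
  show "restrict (\<gamma> \<circ> restrict (restrict (conjmap G g) R \<circ> restrict (inv_into R \<gamma>) R) R) R \<in> F R R"
    by (rule F_comp[OF F_comp[OF \<gamma>iF cgF] \<gamma>])
  fix y assume y: "y \<in> R"
  have "restrict (inv_into R \<gamma>) R y \<in> R" by (rule F_map[OF \<gamma>iF y])
  then show "restrict (\<gamma> \<circ> restrict (restrict (conjmap G g) R \<circ> restrict (inv_into R \<gamma>) R) R) R y
          = \<gamma> (conjmap G g (restrict (inv_into R \<gamma>) R y))" using y by simp
qed

lemma step3a:
  assumes ab: "\<forall>x\<in>Q. \<forall>y\<in>Q. x \<otimes> y = y \<otimes> x"
    and R: "subgroup R G" and fn: "fully_normalized G F R" and \<gamma>: "\<gamma> \<in> F R R"
    and gQ: "g \<in> Q" and gN: "g \<in> normalizerS G R"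
  shows "g \<in> N_phi G R \<gamma>"
proof -
  have gc: "g \<in> carrier G" and cgR: "conjmap G g ` R \<subseteq> R" using gN normS_iff[OF R] by auto
  define \<gamma>i where "\<gamma>i = restrict (inv_into R \<gamma>) R"
  have \<gamma>iF: "\<gamma>i \<in> F R R" unfolding \<gamma>i_def by (rule AutG_inv_F[OF R \<gamma>])
  define \<delta> where "\<delta> = restrict (\<gamma> \<circ> restrict (restrict (conjmap G g) R \<circ> restrict (inv_into R \<gamma>) R) R) R"
  have \<delta>F: "\<delta> \<in> F R R" unfolding \<delta>_def by (rule gamma_setup(1)[OF R \<gamma> gc cgR])
  have \<delta>v: "\<delta> y = \<gamma> (conjmap G g (\<gamma>i y))" if "y \<in> R" for y
    unfolding \<delta>_def \<gamma>i_def by (rule gamma_setup(2)[OF R \<gamma> gc cgR that])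
  have Rc: "\<And>y. y \<in> R \<Longrightarrow> y \<in> carrier G" using subgroup.mem_carrier[OF R] by blast
  define Z where "Z = R \<inter> Q"
  have Z: "subgroup Z G" unfolding Z_def by (rule subgroups_Inter_pair[OF R QS])
  have ZR: "Z \<subseteq> R" unfolding Z_def by blast
  have inv: "\<eta> ` Z \<subseteq> Z" if \<eta>: "\<eta> \<in> F R R" for \<eta>
  proof
    fix y assume "y \<in> \<eta> ` Z"
    then obtain z where z: "z \<in> R" "z \<in> Q" "y = \<eta> z" unfolding Z_def by blast
    then show "y \<in> Z" unfolding Z_def using F_map[OF \<eta> z(1)] SC[OF \<eta> z(1) z(2)] by simp
  qed
  have fixZ: "\<delta> z = z" if z: "z \<in> Z" for z
  proof -
    have zR: "z \<in> R" using z ZR by blast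
    have w: "\<gamma>i z \<in> Z" using inv[OF \<gamma>iF] z by blast
    then have wQ: "\<gamma>i z \<in> Q" unfolding Z_def by blast
    have com: "g \<otimes> \<gamma>i z = \<gamma>i z \<otimes> g" using ab gQ wQ by blast
    have "conjmap G g (\<gamma>i z) = \<gamma>i z"
      unfolding conjmap_def using com gc Qc[OF wQ] by (simp add: m_assoc)
    then show ?thesis using \<delta>v[OF zR] AutG_inv_app2[OF \<gamma> zR] unfolding \<gamma>i_def by simp
  qed
  have modZ: "inv y \<otimes> \<delta> y \<in> Z" if y: "y \<in> R" for y
  proof -
    define x where "x = \<gamma>i y"
    have x: "x \<in> R" unfolding x_def by (rule F_map[OF \<gamma>iF y])
    have xc: "x \<in> carrier G" by (rule Rc[OF x])
    have ex: "\<gamma> x = y" unfolding x_def \<gamma>i_def by (rule AutG_inv_app2[OF \<gamma> y])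
    have cgx: "conjmap G g x \<in> R" using cgR x by blast
    define w where "w = inv x \<otimes> conjmap G g x"
    have wR: "w \<in> R" unfolding w_def using subgroup.m_closed[OF R subgroup.m_inv_closed[OF R x] cgx] .
    have "conjmap G (inv x) g \<in> Q" by (rule Q_conj[OF inv_closed[OF xc] gQ])
    then have "inv x \<otimes> g \<otimes> x \<otimes> inv g \<in> Q"
      using subgroup.m_closed[OF QS _ subgroup.m_inv_closed[OF QS gQ]] xc unfolding conjmap_def by simp
    then have wQ: "w \<in> Q" unfolding w_def conjmap_def using xc gc by (simp add: m_assoc)
    have "\<gamma> w \<in> Z" using inv[OF \<gamma>] wR wQ unfolding Z_def by blast
    moreover have "\<gamma> w = inv y \<otimes> \<delta> y"
      unfolding w_def using F_mult[OF \<gamma> subgroup.m_inv_closed[OF R x] cgx] F_inv[OF \<gamma> x] ex \<delta>v[OF y]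
      unfolding x_def by simp
    ultimately show ?thesis by simp
  qed
  have "\<delta> \<in> HomS G R R" by (rule KL[OF R fn Z ZR inv \<delta>F fixZ modZ])
  then obtain h where h: "h \<in> carrier G" "\<delta> = restrict (conjmap G h) R" unfolding HomS_iff by blast
  have "\<gamma> (conjmap G g x) = conjmap G h (\<gamma> x)" if x: "x \<in> R" for x
  proof -
    have gx: "\<gamma> x \<in> R" by (rule F_map[OF \<gamma> x])
    have "\<delta> (\<gamma> x) = \<gamma> (conjmap G g x)" using \<delta>v[OF gx] AutG_inv_app1[OF \<gamma> x] unfolding \<gamma>i_def by simp
    moreover have "\<delta> (\<gamma> x) = conjmap G h (\<gamma> x)" using h(2) gx by simp
    ultimately show ?thesis by simp
  qed
  then show ?thesis unfolding N_phi_def using gN h(1) by blast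
qed

lemma step3b:
  assumes PZ: "P \<subseteq> fusion_center G F"
    and R: "subgroup R G" and fn: "fully_normalized G F R" and PR: "P \<subseteq> R" and \<gamma>: "\<gamma> \<in> F R R"
    and gQ: "g \<in> Q" and gN: "g \<in> normalizerS G R"
  shows "g \<in> N_phi G R \<gamma>"
proof -
  have gc: "g \<in> carrier G" and cgR: "conjmap G g ` R \<subseteq> R" using gN normS_iff[OF R] by auto
  have Rc: "\<And>y. y \<in> R \<Longrightarrow> y \<in> carrier G" using subgroup.mem_carrier[OF R] by blast
  define \<gamma>i where "\<gamma>i = restrict (inv_into R \<gamma>) R"
  have \<gamma>iF: "\<gamma>i \<in> F R R" unfolding \<gamma>i_def by (rule AutG_inv_F[OF R \<gamma>])
  have \<gamma>P: "\<gamma> ` P = P" by (rule Pinv[OF \<gamma> PR])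
  note XX = induced[OF \<gamma> PR \<gamma>P]
  obtain \<psi>0 where \<psi>0': "\<psi>0 \<in> fusion_quotient G F P (cos ` R) (cos ` R) \<and> (\<forall>r\<in>R. \<psi>0 (cos r) = cos (\<gamma> r))"
    using XX by blast
  note \<psi>0 = conjunct1[OF \<psi>0'] conjunct2[OF \<psi>0']
  from Qquot[OF \<psi>0(1)] obtain A B \<chi> where \<chi>': "cos ` R \<subseteq> A \<and> cos ` Q \<subseteq> A \<and> \<chi> \<in> fusion_quotient G F P A B \<and> (\<forall>y\<in>cos ` R. \<chi> y = \<psi>0 y) \<and>
    \<chi> ` (cos ` Q) = cos ` Q"
    by (elim exE) (erule that)
  have \<chi>: "cos ` R \<subseteq> A" "cos ` Q \<subseteq> A" "\<chi> \<in> fusion_quotient G F P A B" "\<forall>y\<in>cos ` R. \<chi> y = \<psi>0 y"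
    using \<chi>' by simp_all
  have cfun: "(\<lambda>r. P #> r) = cos" unfolding cos_def by (rule ext) simp
  from \<chi>(3) obtain R1 R2 \<phi>' where H: "P \<subseteq> R1 \<and> P \<subseteq> R2 \<and> \<phi>' \<in> F R1 R2 \<and> \<phi>' ` P = P \<and>
          A = (\<lambda>r. P #> r) ` R1 \<and> B = (\<lambda>r. P #> r) ` R2 \<and>
          \<chi> \<in> extensional A \<and> (\<forall>r\<in>R1. \<chi> (P #> r) = P #> \<phi>' r)"
    unfolding fusion_quotient_def mem_Collect_eq by (elim exE) (erule that)
  have PR1: "P \<subseteq> R1" and \<phi>': "\<phi>' \<in> F R1 R2" and A: "A = cos ` R1"
    and \<chi>v: "\<forall>r\<in>R1. \<chi> (cos r) = cos (\<phi>' r)" using H unfolding cfun by simp_all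
  have R1: "subgroup R1 G" using F_sub[OF \<phi>'] by blast
  have RR1: "R \<subseteq> R1"
  proof
    fix r assume r: "r \<in> R"
    have "cos r \<in> cos ` R1" using \<chi>(1) A r by blast
    then show "r \<in> R1" using cos_mem[OF R1 PR1 Rc[OF r]] by simp
  qed
  have QR1: "Q \<subseteq> R1"
  proof
    fix r assume r: "r \<in> Q"
    have "cos r \<in> cos ` R1" using \<chi>(2) A r by blast
    then show "r \<in> R1" using cos_mem[OF R1 PR1 Qc[OF r]] by simp
  qed
  have agree: "\<phi>' r \<otimes> inv (\<gamma> r) \<in> P" if r: "r \<in> R" for r
  proof -
    have rR1: "r \<in> R1" using r RR1 by blast
    have cr: "cos r \<in> cos ` R" using r by blast
    have "cos (\<phi>' r) = \<chi> (cos r)" using \<chi>v rR1 by simp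
    also have "\<dots> = \<psi>0 (cos r)" using \<chi>(4) r by simp
    also have "\<dots> = cos (\<gamma> r)" using \<psi>0(2) r by simp
    finally have "cos (\<phi>' r) = cos (\<gamma> r)" .
    then show ?thesis using cos_eq_iff[OF F_carr[OF \<phi>' rR1] F_carr[OF \<gamma> r]] by simp
  qed
  define h where "h = \<phi>' g"
  have gR1: "g \<in> R1" using gQ QR1 by blast
  have hc: "h \<in> carrier G" unfolding h_def by (rule F_carr[OF \<phi>' gR1])
  have key: "\<gamma> (conjmap G g x) \<otimes> inv (conjmap G h (\<gamma> x)) \<in> P" if x: "x \<in> R" for x
  proof -
    have xR1: "x \<in> R1" using x RR1 by blast
    have xc: "x \<in> carrier G" by (rule Rc[OF x])
    have cgx: "conjmap G g x \<in> R" using cgR x by blast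
    have p1: "\<phi>' (conjmap G g x) \<otimes> inv (\<gamma> (conjmap G g x)) \<in> P" by (rule agree[OF cgx])
    have e2: "\<phi>' (conjmap G g x) = h \<otimes> \<phi>' x \<otimes> inv h"
    proof -
      have "g \<otimes> x \<in> R1" using subgroup.m_closed[OF R1 gR1 xR1] .
      moreover have "inv g \<in> R1" using subgroup.m_inv_closed[OF R1 gR1] .
      ultimately show ?thesis unfolding conjmap_def h_def
        using F_mult[OF \<phi>' gR1 xR1] F_mult[OF \<phi>'] F_inv[OF \<phi>' gR1] by simp
    qed
    have p2: "\<phi>' x \<otimes> inv (\<gamma> x) \<in> P" by (rule agree[OF x])
    have c1: "\<phi>' x \<in> carrier G" by (rule F_carr[OF \<phi>' xR1])
    have c2: "\<gamma> x \<in> carrier G" by (rule F_carr[OF \<gamma> x])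
    have c3: "\<gamma> (conjmap G g x) \<in> carrier G" by (rule F_carr[OF \<gamma> cgx])
    have c4: "\<phi>' (conjmap G g x) \<in> carrier G" using e2 c1 hc by simp
    have "conjmap G h (\<phi>' x \<otimes> inv (\<gamma> x)) \<in> P" by (rule P_conj[OF hc p2])
    moreover have "conjmap G h (\<phi>' x \<otimes> inv (\<gamma> x)) = \<phi>' (conjmap G g x) \<otimes> inv (conjmap G h (\<gamma> x))"
      using e2 hc c1 c2 by (simp add: conjmap_def m_assoc inv_mult_group)
    ultimately have p3: "\<phi>' (conjmap G g x) \<otimes> inv (conjmap G h (\<gamma> x)) \<in> P" by simp
    have pi1: "inv (\<phi>' (conjmap G g x) \<otimes> inv (\<gamma> (conjmap G g x))) \<in> P" by (rule subgroup.m_inv_closed[OF PS p1])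
    have "inv (\<phi>' (conjmap G g x) \<otimes> inv (\<gamma> (conjmap G g x))) \<otimes> (\<phi>' (conjmap G g x) \<otimes> inv (conjmap G h (\<gamma> x))) \<in> P"
      by (rule subgroup.m_closed[OF PS pi1 p3])
    moreover have "inv (\<phi>' (conjmap G g x) \<otimes> inv (\<gamma> (conjmap G g x))) \<otimes> (\<phi>' (conjmap G g x) \<otimes> inv (conjmap G h (\<gamma> x)))
       = \<gamma> (conjmap G g x) \<otimes> inv (conjmap G h (\<gamma> x))"
      using c3 c4 conj_carr[OF hc c2] by (simp add: m_assoc inv_mult_group)
    ultimately show ?thesis by simp
  qed
  have hR: "conjmap G h ` R \<subseteq> R"
  proof
    fix z assume "z \<in> conjmap G h ` R"
    then obtain y where y: "y \<in> R" "z = conjmap G h y" by blast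
    define x where "x = \<gamma>i y"
    have x: "x \<in> R" unfolding x_def by (rule F_map[OF \<gamma>iF y(1)])
    have ex: "\<gamma> x = y" unfolding x_def \<gamma>i_def by (rule AutG_inv_app2[OF \<gamma> y(1)])
    have cgx: "conjmap G g x \<in> R" using cgR x by blast
    have k: "\<gamma> (conjmap G g x) \<otimes> inv z \<in> P" using key[OF x] ex y(2) by simp
    have zc: "z \<in> carrier G" using y conj_carr[OF hc Rc[OF y(1)]] by simp
    have "inv (\<gamma> (conjmap G g x) \<otimes> inv z) \<otimes> \<gamma> (conjmap G g x) \<in> R"
      using subgroup.m_closed[OF R _ F_map[OF \<gamma> cgx]] subgroup.m_inv_closed[OF PS k] PR by blast
    moreover have "inv (\<gamma> (conjmap G g x) \<otimes> inv z) \<otimes> \<gamma> (conjmap G g x) = z"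
      using zc F_carr[OF \<gamma> cgx] by (simp add: m_assoc inv_mult_group)
    ultimately show "z \<in> R" by simp
  qed
  have hN: "h \<in> normalizerS G R" using normS_iff[OF R] hc hR by simp
  have ihN: "inv h \<in> normalizerS G R" by (rule subgroup.m_inv_closed[OF normS_subgroup[OF R] hN])
  have ihR: "conjmap G (inv h) ` R \<subseteq> R" using normS_iff[OF R] ihN by simp
  have cihF: "restrict (conjmap G (inv h)) R \<in> F R R" by (rule conj_F[OF R R inv_closed[OF hc] ihR])
  define \<delta>1 where "\<delta>1 = restrict (\<gamma> \<circ> restrict (restrict (conjmap G g) R \<circ> restrict (inv_into R \<gamma>) R) R) R"
  have \<delta>1F: "\<delta>1 \<in> F R R" unfolding \<delta>1_def by (rule gamma_setup(1)[OF R \<gamma> gc cgR])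
  have \<delta>1v: "\<delta>1 y = \<gamma> (conjmap G g (\<gamma>i y))" if "y \<in> R" for y
    unfolding \<delta>1_def \<gamma>i_def by (rule gamma_setup(2)[OF R \<gamma> gc cgR that])
  define \<delta> where "\<delta> = restrict (restrict (conjmap G (inv h)) R \<circ> \<delta>1) R"
  have \<delta>F: "\<delta> \<in> F R R" unfolding \<delta>_def by (rule F_comp[OF \<delta>1F cihF])
  have \<delta>v: "\<delta> y = conjmap G (inv h) (\<gamma> (conjmap G g (\<gamma>i y)))" if y: "y \<in> R" for y
    unfolding \<delta>_def using y F_map[OF \<delta>1F y] \<delta>1v[OF y] by simp
  have inv: "\<eta> ` P \<subseteq> P" if \<eta>: "\<eta> \<in> F R R" for \<eta> using Pinv[OF \<eta> PR] by simp
  have fixZ: "\<delta> z = z" if z: "z \<in> P" for z using central_fix[OF PZ \<delta>F z] z PR by blast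
  have modZ: "inv y \<otimes> \<delta> y \<in> P" if y: "y \<in> R" for y
  proof -
    define x where "x = \<gamma>i y"
    have x: "x \<in> R" unfolding x_def by (rule F_map[OF \<gamma>iF y])
    have ex: "\<gamma> x = y" unfolding x_def \<gamma>i_def by (rule AutG_inv_app2[OF \<gamma> y])
    have cgx: "conjmap G g x \<in> R" using cgR x by blast
    have yc: "y \<in> carrier G" by (rule Rc[OF y])
    define q where "q = \<gamma> (conjmap G g x) \<otimes> inv (conjmap G h y)"
    have q: "q \<in> P" unfolding q_def using key[OF x] ex by simp
    have qc: "q \<in> carrier G" by (rule Pc[OF q])
    have e: "\<gamma> (conjmap G g x) = q \<otimes> conjmap G h y"
      unfolding q_def using F_carr[OF \<gamma> cgx] conj_carr[OF hc yc] by (simp add: m_assoc)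
    have "\<delta> y = conjmap G (inv h) q \<otimes> y"
      unfolding \<delta>v[OF y] x_def[symmetric] e
      using conj_mult[OF inv_closed[OF hc] qc conj_carr[OF hc yc]] conj_inv_cancel[OF hc yc] by simp
    moreover have "conjmap G (inv y) (conjmap G (inv h) q) \<in> P"
      by (rule P_conj[OF inv_closed[OF yc] P_conj[OF inv_closed[OF hc] q]])
    ultimately show ?thesis unfolding conjmap_def using yc hc qc by (simp add: m_assoc)
  qed
  have "\<delta> \<in> HomS G R R" by (rule KL[OF R fn PS PR inv \<delta>F fixZ modZ])
  then obtain k where k: "k \<in> carrier G" "\<delta> = restrict (conjmap G k) R" unfolding HomS_iff by blast
  have "\<gamma> (conjmap G g x) = conjmap G (h \<otimes> k) (\<gamma> x)" if x: "x \<in> R" for x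
  proof -
    have gx: "\<gamma> x \<in> R" by (rule F_map[OF \<gamma> x])
    have cgx: "conjmap G g x \<in> R" using cgR x by blast
    have "\<delta> (\<gamma> x) = conjmap G (inv h) (\<gamma> (conjmap G g x))"
      using \<delta>v[OF gx] AutG_inv_app1[OF \<gamma> x] unfolding \<gamma>i_def by simp
    moreover have "\<delta> (\<gamma> x) = conjmap G k (\<gamma> x)" using k(2) gx by simp
    ultimately have "conjmap G (inv h) (\<gamma> (conjmap G g x)) = conjmap G k (\<gamma> x)" by simp
    then have "conjmap G h (conjmap G (inv h) (\<gamma> (conjmap G g x))) = conjmap G h (conjmap G k (\<gamma> x))" by simp
    then show ?thesis using conj_inv_cancel2[OF hc F_carr[OF \<gamma> cgx]] conj_comp[OF hc k(1) F_carr[OF \<gamma> x]] by simp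
  qed
  then show ?thesis unfolding N_phi_def using gN m_closed[OF hc k(1)] by blast
qed

lemma step3:
  assumes R: "subgroup R G" and fn: "fully_normalized G F R" and PR: "P \<subseteq> R" and \<gamma>: "\<gamma> \<in> F R R"
    and gQ: "g \<in> Q" and gN: "g \<in> normalizerS G R"
  shows "g \<in> N_phi G R \<gamma>"
  using cases step3a[OF _ R fn \<gamma> gQ gN] step3b[OF _ R fn PR \<gamma> gQ gN] by blast

end

context lctx begin

lemma setmult_sub: assumes D: "subgroup D G" and "A \<subseteq> D" "B \<subseteq> D" shows "A <#> B \<subseteq> D"
  unfolding set_mult_def using subgroup.m_closed[OF D] assms(2,3) by blast

lemma img_setmult: assumes \<psi>: "\<psi> \<in> F D V" and "A \<subseteq> D" "B \<subseteq> D"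
  shows "\<psi> ` (A <#> B) = \<psi> ` A <#> \<psi> ` B"
proof -
  have "\<psi> (a \<otimes> b) = \<psi> a \<otimes> \<psi> b" if "a \<in> A" "b \<in> B" for a b
    using F_mult[OF \<psi>] that assms(2,3) by blast
  then show ?thesis unfolding set_mult_def by (auto simp: image_iff) (metis)
qed

lemma UQ_subgroup: assumes U: "subgroup U G" shows "subgroup (U <#> Q) G"
proof -
  have "U <#> Q = Q <#> U" by (rule commut_normal[OF U Q_normal])
  then show ?thesis using mult_norm_subgroup[OF Q_normal U] by simp
qed

lemma U_UQ: assumes U: "subgroup U G" shows "U \<subseteq> U <#> Q"
proof
  fix u assume u: "u \<in> U"
  have "u \<otimes> \<one> \<in> U <#> Q" unfolding set_mult_def using u subgroup.one_closed[OF QS] by blast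
  then show "u \<in> U <#> Q" using subgroup.mem_carrier[OF U u] by simp
qed

lemma Q_UQ: assumes U: "subgroup U G" shows "Q \<subseteq> U <#> Q"
proof
  fix q assume q: "q \<in> Q"
  have "\<one> \<otimes> q \<in> U <#> Q" unfolding set_mult_def using q subgroup.one_closed[OF U] by blast
  then show "q \<in> U <#> Q" using Qc[OF q] by simp
qed

lemma card_le_S: assumes "subgroup U G" shows "card U \<le> card (carrier G)"
  by (rule card_mono[OF finG subgroup.subset[OF assms]])

lemma MI:
  "\<forall>U \<phi>. card (carrier G) - card U = n \<longrightarrow> P \<subseteq> U \<longrightarrow> \<phi> \<in> F U (carrier G) \<longrightarrow>
     (\<exists>D \<psi>. U \<subseteq> D \<and> Q \<subseteq> D \<and> \<psi> \<in> F D (carrier G) \<and> (\<forall>x\<in>U. \<psi> x = \<phi> x) \<and> \<psi> ` Q = Q)"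
proof (induction n rule: less_induct)
  case (less n)
  show ?case
  proof (intro allI impI)
    fix U \<phi> assume n: "card (carrier G) - card U = n" and PU: "P \<subseteq> U" and \<phi>: "\<phi> \<in> F U (carrier G)"
    have IH: "\<exists>D \<psi>. U' \<subseteq> D \<and> Q \<subseteq> D \<and> \<psi> \<in> F D (carrier G) \<and> (\<forall>x\<in>U'. \<psi> x = \<phi>' x) \<and> \<psi> ` Q = Q"
      if lt: "card U < card U'" and PU': "P \<subseteq> U'" and \<phi>': "\<phi>' \<in> F U' (carrier G)" for U' \<phi>'
    proof -
      have "card U' \<le> card (carrier G)" by (rule card_le_S[OF F_sub(1)[OF \<phi>']])
      then have m: "card (carrier G) - card U' < n" using n lt by linarith
      show ?thesis using less.IH[OF m, rule_format, OF refl PU' \<phi>'] .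
    qed
    have Us: "subgroup U G" by (rule F_sub(1)[OF \<phi>])
    show "\<exists>D \<psi>. U \<subseteq> D \<and> Q \<subseteq> D \<and> \<psi> \<in> F D (carrier G) \<and> (\<forall>x\<in>U. \<psi> x = \<phi> x) \<and> \<psi> ` Q = Q"
    proof (cases "Q \<subseteq> U")
      case True
      then show ?thesis using \<phi> QF[OF \<phi> True] by blast
    next
      case False
      define UQ where "UQ = U <#> Q"
      have UQs: "subgroup UQ G" unfolding UQ_def by (rule UQ_subgroup[OF Us])
      have UUQ: "U \<subseteq> UQ" unfolding UQ_def by (rule U_UQ[OF Us])
      have QUQ: "Q \<subseteq> UQ" unfolding UQ_def by (rule Q_UQ[OF Us])
      have UneUQ: "U \<noteq> UQ" using False QUQ by blast
      define Y where "Y = normalizerS G U \<inter> UQ"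
      have Ys: "subgroup Y G" unfolding Y_def by (rule subgroups_Inter_pair[OF normS_subgroup[OF Us] UQs])
      have YN: "Y \<subseteq> normalizerS G U" unfolding Y_def by blast
      have UY: "U \<subseteq> Y" unfolding Y_def using sub_normS[OF Us] UUQ by blast
      obtain a where a: "a \<in> UQ - U" "conjmap G a ` U = U" using norm_growth[OF Us UQs UUQ UneUQ] by blast
      have "a \<in> Y" unfolding Y_def normalizerS_def using a subgroup.mem_carrier[OF UQs] by blast
      then have UY': "U \<subset> Y" using UY a(1) by blast
      have cUY: "card U < card Y" by (rule psubset_card_mono[OF sub_fin[OF Ys] UY'])
      have PY: "P \<subseteq> Y" using PU UY by blast
      obtain \<beta>0 where \<beta>0: "\<beta>0 \<in> F U (carrier G)" and fn: "fully_normalized G F (\<beta>0 ` U)"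
        using fn_exists[OF Us] by blast
      define Xs where "Xs = \<beta>0 ` U"
      have Xss: "subgroup Xs G" unfolding Xs_def by (rule F_img_subgroup[OF \<beta>0])
      have fnX: "fully_normalized G F Xs" using fn unfolding Xs_def .
      have PXs: "P \<subseteq> Xs" unfolding Xs_def using Pinv[OF \<beta>0 PU] PU by blast
      obtain \<alpha> where \<alpha>: "\<alpha> \<in> F (normalizerS G U) (carrier G)" "\<alpha> ` U = Xs" "\<forall>x\<in>U. \<alpha> x \<in> Xs"
        using conj_to_fn[OF Us Xss fnX \<beta>0] unfolding Xs_def by blast
      have \<alpha>Y: "restrict \<alpha> Y \<in> F Y (carrier G)"
        by (rule F_restr[OF \<alpha>(1) Ys YN subgroup_self]) (use F_carr[OF \<alpha>(1)] YN in blast)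
      from IH[OF cUY PY \<alpha>Y] obtain D1 \<alpha>h where H1: "Y \<subseteq> D1 \<and> Q \<subseteq> D1 \<and> \<alpha>h \<in> F D1 (carrier G) \<and>
          (\<forall>x\<in>Y. \<alpha>h x = restrict \<alpha> Y x) \<and> \<alpha>h ` Q = Q"
        by (elim exE) (erule that)
      have YD1: "Y \<subseteq> D1" and QD1: "Q \<subseteq> D1" and \<alpha>h: "\<alpha>h \<in> F D1 (carrier G)"
        and \<alpha>hv: "\<And>x. x \<in> Y \<Longrightarrow> \<alpha>h x = \<alpha> x" and \<alpha>hQ: "\<alpha>h ` Q = Q" using H1 by auto
      have D1s: "subgroup D1 G" by (rule F_sub(1)[OF \<alpha>h])
      have UQD1: "UQ \<subseteq> D1" unfolding UQ_def using setmult_sub[OF D1s] UY YD1 QD1 by blast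
      have \<alpha>hU: "\<alpha>h ` U = Xs"
      proof -
        have "\<alpha>h ` U = \<alpha> ` U" by (rule image_cong[OF refl]) (use \<alpha>hv UY in blast)
        then show ?thesis using \<alpha>(2) by simp
      qed
      have \<alpha>hUQ: "\<alpha>h ` UQ = Xs <#> Q"
        unfolding UQ_def using img_setmult[OF \<alpha>h, of U Q] UY YD1 QD1 \<alpha>hU \<alpha>hQ by auto
      define \<phi>U where "\<phi>U = \<phi> ` U"
      have \<phi>Us: "subgroup \<phi>U G" unfolding \<phi>U_def by (rule F_img_subgroup[OF \<phi>])
      have \<phi>1: "\<phi> \<in> F U \<phi>U" unfolding \<phi>U_def by (rule F_img[OF \<phi>])
      define \<phi>i where "\<phi>i = restrict (inv_into U \<phi>) \<phi>U"
      have \<phi>iF: "\<phi>i \<in> F \<phi>U U" unfolding \<phi>i_def \<phi>U_def by (rule F_invm[OF \<phi>])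
      have \<phi>iv: "\<phi>i (\<phi> x) = x" if "x \<in> U" for x unfolding \<phi>i_def \<phi>U_def by (rule inv_into_F[OF \<phi> that])
      define \<beta>1 where "\<beta>1 = restrict (\<beta>0 \<circ> \<phi>i) \<phi>U"
      have \<beta>1F: "\<beta>1 \<in> F \<phi>U (carrier G)" unfolding \<beta>1_def by (rule F_comp[OF \<phi>iF \<beta>0])
      have \<beta>1v: "\<beta>1 (\<phi> x) = \<beta>0 x" if "x \<in> U" for x
        unfolding \<beta>1_def using that \<phi>iv[OF that] unfolding \<phi>U_def by simp
      have \<beta>1img: "\<beta>1 ` \<phi>U = Xs"
      proof -
        have "\<beta>1 ` \<phi>U = (\<lambda>x. \<beta>1 (\<phi> x)) ` U" unfolding \<phi>U_def by (simp add: image_image)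
        also have "\<dots> = \<beta>0 ` U" by (rule image_cong[OF refl]) (rule \<beta>1v)
        finally show ?thesis unfolding Xs_def .
      qed
      obtain \<beta> where \<beta>: "\<beta> \<in> F (normalizerS G \<phi>U) (carrier G)" "\<beta> ` \<phi>U = Xs" "\<forall>y\<in>\<phi>U. \<beta> y \<in> Xs"
        using conj_to_fn[OF \<phi>Us Xss fnX \<beta>1F \<beta>1img] by blast
      have \<phi>UN: "\<phi>U \<subseteq> normalizerS G \<phi>U" by (rule sub_normS[OF \<phi>Us])
      have UN: "U \<subseteq> normalizerS G U" by (rule sub_normS[OF Us])
      define \<alpha>U where "\<alpha>U = restrict \<alpha> U"
      have \<alpha>UF: "\<alpha>U \<in> F U Xs" unfolding \<alpha>U_def
        by (rule F_restr[OF \<alpha>(1) Us UN Xss]) (use \<alpha>(2) in blast)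
      have \<alpha>Uimg: "\<alpha>U ` U = Xs" unfolding \<alpha>U_def using \<alpha>(2) by simp
      define \<alpha>i where "\<alpha>i = restrict (inv_into U \<alpha>U) Xs"
      have \<alpha>iF: "\<alpha>i \<in> F Xs U" unfolding \<alpha>i_def using F_invm[OF \<alpha>UF] \<alpha>Uimg by simp
      have \<alpha>iv: "\<alpha>i (\<alpha> x) = x" if x: "x \<in> U" for x
      proof -
        have "restrict (inv_into U \<alpha>U) (\<alpha>U ` U) (\<alpha>U x) = x" by (rule inv_into_F[OF \<alpha>UF x])
        moreover have "\<alpha> x \<in> Xs" using \<alpha>(3) x by blast
        ultimately show ?thesis unfolding \<alpha>i_def using \<alpha>Uimg x unfolding \<alpha>U_def by simp
      qed
      define \<phi>\<alpha>i where "\<phi>\<alpha>i = restrict (\<phi> \<circ> \<alpha>i) Xs"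
      have \<phi>\<alpha>iF: "\<phi>\<alpha>i \<in> F Xs \<phi>U" unfolding \<phi>\<alpha>i_def by (rule F_comp[OF \<alpha>iF \<phi>1])
      define \<beta>U where "\<beta>U = restrict \<beta> \<phi>U"
      have \<beta>UF: "\<beta>U \<in> F \<phi>U Xs" unfolding \<beta>U_def
        by (rule F_restr[OF \<beta>(1) \<phi>Us \<phi>UN Xss]) (use \<beta>(2) in blast)
      define \<gamma> where "\<gamma> = restrict (\<beta>U \<circ> \<phi>\<alpha>i) Xs"
      have \<gamma>F: "\<gamma> \<in> F Xs Xs" unfolding \<gamma>_def by (rule F_comp[OF \<phi>\<alpha>iF \<beta>UF])
      have \<gamma>v: "\<gamma> (\<alpha> x) = \<beta> (\<phi> x)" if x: "x \<in> U" for x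
      proof -
        have ax: "\<alpha> x \<in> Xs" using \<alpha>(3) x by blast
        have px: "\<phi> x \<in> \<phi>U" unfolding \<phi>U_def using x by blast
        show ?thesis unfolding \<gamma>_def \<phi>\<alpha>i_def \<beta>U_def using ax px \<alpha>iv[OF x] by simp
      qed
      have fcX: "fully_centralized G F Xs" using sylow_ax[OF Xss fnX] by blast
      have \<gamma>S: "\<gamma> \<in> F Xs (carrier G)" by (rule F_toS[OF \<gamma>F])
      have \<gamma>img: "\<gamma> ` Xs = Xs" by (rule F_aut[OF \<gamma>F])
      obtain \<gamma>b where \<gamma>b: "\<gamma>b \<in> F (N_phi G Xs \<gamma>) (carrier G)" "\<forall>x\<in>Xs. \<gamma>b x = \<gamma> x"
        using ext_ax[OF Xss \<gamma>S] fcX \<gamma>img by auto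
      have Ngs: "subgroup (N_phi G Xs \<gamma>) G" by (rule F_sub(1)[OF \<gamma>b(1)])
      have XsNg: "Xs \<subseteq> N_phi G Xs \<gamma>"
      proof
        fix x assume x: "x \<in> Xs"
        have xN: "x \<in> normalizerS G Xs" using sub_normS[OF Xss] x by blast
        have "\<gamma> (conjmap G x y) = conjmap G (\<gamma> x) (\<gamma> y)" if y: "y \<in> Xs" for y
        proof -
          have "x \<otimes> y \<in> Xs" "inv x \<in> Xs" using subgroup.m_closed[OF Xss x y] subgroup.m_inv_closed[OF Xss x] by auto
          then show ?thesis unfolding conjmap_def
            using F_mult[OF \<gamma>F] F_inv[OF \<gamma>F x] x y by simp
        qed
        then show "x \<in> N_phi G Xs \<gamma>" unfolding N_phi_def using xN F_carr[OF \<gamma>F x] by blast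
      qed
      define XsQ where "XsQ = Xs <#> Q"
      have XsQs: "subgroup XsQ G" unfolding XsQ_def by (rule UQ_subgroup[OF Xss])
      define Ysx where "Ysx = normalizerS G Xs \<inter> XsQ"
      have Ysxs: "subgroup Ysx G" unfolding Ysx_def by (rule subgroups_Inter_pair[OF normS_subgroup[OF Xss] XsQs])
      have YsN: "Ysx \<subseteq> N_phi G Xs \<gamma>"
      proof
        fix y assume y: "y \<in> Ysx"
        then obtain x q where xq: "x \<in> Xs" "q \<in> Q" "y = x \<otimes> q" unfolding Ysx_def XsQ_def set_mult_def by blast
        have yN: "y \<in> normalizerS G Xs" using y unfolding Ysx_def by blast
        have xN: "x \<in> normalizerS G Xs" using sub_normS[OF Xss] xq(1) by blast
        have xc: "x \<in> carrier G" and qc: "q \<in> carrier G" using xq subgroup.mem_carrier[OF Xss] Qc by auto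
        have "inv x \<otimes> y \<in> normalizerS G Xs"
          by (rule subgroup.m_closed[OF normS_subgroup[OF Xss] subgroup.m_inv_closed[OF normS_subgroup[OF Xss] xN] yN])
        then have qN: "q \<in> normalizerS G Xs" using xq(3) xc qc by (simp add: m_assoc[symmetric])
        have "q \<in> N_phi G Xs \<gamma>" by (rule step3[OF Xss fnX PXs \<gamma>F xq(2) qN])
        moreover have "x \<in> N_phi G Xs \<gamma>" using XsNg xq(1) by blast
        ultimately show "y \<in> N_phi G Xs \<gamma>" using subgroup.m_closed[OF Ngs] xq(3) by blast
      qed
      have XsYsx: "Xs \<subseteq> Ysx" unfolding Ysx_def XsQ_def using sub_normS[OF Xss] U_UQ[OF Xss] by blast
      have PYs: "P \<subseteq> Ysx" using PXs XsYsx by blast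
      have \<alpha>YY: "\<alpha> ` Y \<subseteq> Ysx"
      proof
        fix z assume "z \<in> \<alpha> ` Y"
        then obtain y where y: "y \<in> Y" "z = \<alpha> y" by blast
        have yN: "y \<in> normalizerS G U" using y YN by blast
        have yc: "y \<in> carrier G" using yN normS_carr by blast
        have "conjmap G (\<alpha> y) ` Xs \<subseteq> Xs"
        proof
          fix w assume "w \<in> conjmap G (\<alpha> y) ` Xs"
          then obtain x where x: "x \<in> U" "w = conjmap G (\<alpha> y) (\<alpha> x)" using \<alpha>(2) by blast
          have xN: "x \<in> normalizerS G U" using UN x(1) by blast
          have cyx: "conjmap G y x \<in> U" using yN normS_iff[OF Us] x(1) by blast
          have "y \<otimes> x \<in> normalizerS G U" "inv y \<in> normalizerS G U"
            using subgroup.m_closed[OF normS_subgroup[OF Us] yN xN] subgroup.m_inv_closed[OF normS_subgroup[OF Us] yN] by auto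
          then have "\<alpha> (conjmap G y x) = conjmap G (\<alpha> y) (\<alpha> x)"
            unfolding conjmap_def using F_mult[OF \<alpha>(1)] F_inv[OF \<alpha>(1) yN] yN xN by simp
          then show "w \<in> Xs" using x(2) \<alpha>(3) cyx by metis
        qed
        then have "\<alpha> y \<in> normalizerS G Xs" using normS_iff[OF Xss] F_carr[OF \<alpha>(1) yN] by simp
        moreover have "\<alpha> y \<in> XsQ"
        proof -
          have "y \<in> UQ" using y(1) unfolding Y_def by blast
          then have "\<alpha>h y \<in> \<alpha>h ` UQ" by blast
          then show ?thesis using \<alpha>hUQ \<alpha>hv[OF y(1)] unfolding XsQ_def by simp
        qed
        ultimately show "z \<in> Ysx" unfolding Ysx_def using y(2) by blast
      qed
      have "card Y = card (\<alpha> ` Y)" using F_card_sub[OF \<alpha>(1) YN] by simp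
      also have "\<dots> \<le> card Ysx" by (rule card_mono[OF sub_fin[OF Ysxs] \<alpha>YY])
      finally have cUYs: "card U < card Ysx" using cUY by simp
      have \<gamma>bY: "restrict \<gamma>b Ysx \<in> F Ysx (carrier G)"
        by (rule F_restr[OF \<gamma>b(1) Ysxs YsN subgroup_self]) (use F_carr[OF \<gamma>b(1)] YsN in blast)
      from IH[OF cUYs PYs \<gamma>bY] obtain D2 \<gamma>h where H2: "Ysx \<subseteq> D2 \<and> Q \<subseteq> D2 \<and> \<gamma>h \<in> F D2 (carrier G) \<and>
          (\<forall>x\<in>Ysx. \<gamma>h x = restrict \<gamma>b Ysx x) \<and> \<gamma>h ` Q = Q"
        by (elim exE) (erule that)
      have YsD2: "Ysx \<subseteq> D2" and QD2: "Q \<subseteq> D2" and \<gamma>h: "\<gamma>h \<in> F D2 (carrier G)"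
        and \<gamma>hv0: "\<And>x. x \<in> Ysx \<Longrightarrow> \<gamma>h x = \<gamma>b x" and \<gamma>hQ: "\<gamma>h ` Q = Q" using H2 by auto
      have \<gamma>hv: "\<gamma>h x = \<gamma> x" if "x \<in> Xs" for x using \<gamma>hv0 XsYsx \<gamma>b(2) that by auto
      have D2s: "subgroup D2 G" by (rule F_sub(1)[OF \<gamma>h])
      have XsQD2: "XsQ \<subseteq> D2" unfolding XsQ_def using setmult_sub[OF D2s] XsYsx YsD2 QD2 by blast
      have \<gamma>hXs: "\<gamma>h ` Xs = Xs"
      proof -
        have "\<gamma>h ` Xs = \<gamma> ` Xs" by (rule image_cong[OF refl]) (rule \<gamma>hv)
        then show ?thesis using \<gamma>img by simp
      qed
      have \<gamma>hXsQ: "\<gamma>h ` XsQ = XsQ"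
        unfolding XsQ_def using img_setmult[OF \<gamma>h, of Xs Q] XsYsx YsD2 QD2 \<gamma>hXs \<gamma>hQ by auto
      define N\<phi> where "N\<phi> = normalizerS G \<phi>U"
      have N\<phi>s: "subgroup N\<phi> G" unfolding N\<phi>_def by (rule normS_subgroup[OF \<phi>Us])
      have P\<phi>U: "P \<subseteq> \<phi>U" unfolding \<phi>U_def using Pinv[OF \<phi> PU] PU by blast
      have PN\<phi>: "P \<subseteq> N\<phi>" using P\<phi>U \<phi>UN unfolding N\<phi>_def by blast
      have c\<phi>U: "card \<phi>U = card U" unfolding \<phi>U_def by (rule F_card[OF \<phi>])
      have \<phi>Une: "\<phi>U \<noteq> carrier G"
      proof
        assume e: "\<phi>U = carrier G"
        then have "card U = card (carrier G)" using c\<phi>U by simp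
        then have "U = carrier G" using card_subset_eq[OF finG subgroup.subset[OF Us]] by simp
        then show False using False subgroup.subset[OF QS] by simp
      qed
      obtain a' where a': "a' \<in> carrier G - \<phi>U" "conjmap G a' ` \<phi>U = \<phi>U"
        using norm_growth[OF \<phi>Us subgroup_self subgroup.subset[OF \<phi>Us] \<phi>Une] by blast
      have "a' \<in> N\<phi>" unfolding N\<phi>_def normalizerS_def using a' by blast
      then have "\<phi>U \<subset> N\<phi>" using \<phi>UN a'(1) unfolding N\<phi>_def by blast
      then have "card \<phi>U < card N\<phi>" by (rule psubset_card_mono[OF sub_fin[OF N\<phi>s]])
      then have cUN: "card U < card N\<phi>" using c\<phi>U by simp
      have \<beta>N: "\<beta> \<in> F N\<phi> (carrier G)" using \<beta>(1) unfolding N\<phi>_def .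
      from IH[OF cUN PN\<phi> \<beta>N] obtain D3 \<beta>h where H3: "N\<phi> \<subseteq> D3 \<and> Q \<subseteq> D3 \<and> \<beta>h \<in> F D3 (carrier G) \<and>
          (\<forall>x\<in>N\<phi>. \<beta>h x = \<beta> x) \<and> \<beta>h ` Q = Q"
        by (elim exE) (erule that)
      have ND3: "N\<phi> \<subseteq> D3" and QD3: "Q \<subseteq> D3" and \<beta>h: "\<beta>h \<in> F D3 (carrier G)"
        and \<beta>hv: "\<And>x. x \<in> N\<phi> \<Longrightarrow> \<beta>h x = \<beta> x" and \<beta>hQ: "\<beta>h ` Q = Q" using H3 by auto
      have D3s: "subgroup D3 G" by (rule F_sub(1)[OF \<beta>h])
      define \<phi>UQ where "\<phi>UQ = \<phi>U <#> Q"
      have \<phi>UQs: "subgroup \<phi>UQ G" unfolding \<phi>UQ_def by (rule UQ_subgroup[OF \<phi>Us])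
      have \<phi>UD3: "\<phi>U \<subseteq> D3" using \<phi>UN ND3 unfolding N\<phi>_def by blast
      have \<phi>UQD3: "\<phi>UQ \<subseteq> D3" unfolding \<phi>UQ_def using setmult_sub[OF D3s \<phi>UD3 QD3] .
      have \<beta>h\<phi>U: "\<beta>h ` \<phi>U = Xs"
      proof -
        have "\<beta>h ` \<phi>U = \<beta> ` \<phi>U" by (rule image_cong[OF refl]) (use \<beta>hv \<phi>UN in \<open>auto simp: N\<phi>_def\<close>)
        then show ?thesis using \<beta>(2) by simp
      qed
      have \<beta>h\<phi>UQ: "\<beta>h ` \<phi>UQ = XsQ"
        unfolding \<phi>UQ_def XsQ_def using img_setmult[OF \<beta>h \<phi>UD3 QD3] \<beta>h\<phi>U \<beta>hQ by simp
      define a1 where "a1 = restrict \<alpha>h UQ"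
      have a1F: "a1 \<in> F UQ XsQ" unfolding a1_def
        by (rule F_restr[OF \<alpha>h UQs UQD1 XsQs]) (use \<alpha>hUQ in \<open>simp add: XsQ_def\<close>)
      define g1 where "g1 = restrict \<gamma>h XsQ"
      have g1F: "g1 \<in> F XsQ XsQ" unfolding g1_def
        by (rule F_restr[OF \<gamma>h XsQs XsQD2 XsQs]) (use \<gamma>hXsQ in simp)
      define b1 where "b1 = restrict \<beta>h \<phi>UQ"
      have b1F: "b1 \<in> F \<phi>UQ XsQ" unfolding b1_def
        by (rule F_restr[OF \<beta>h \<phi>UQs \<phi>UQD3 XsQs]) (use \<beta>h\<phi>UQ in simp)
      have b1img: "b1 ` \<phi>UQ = XsQ" unfolding b1_def using \<beta>h\<phi>UQ by simp
      define binv where "binv = restrict (inv_into \<phi>UQ b1) XsQ"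
      have binvF: "binv \<in> F XsQ \<phi>UQ" unfolding binv_def using F_invm[OF b1F] b1img by simp
      have binvv: "binv (b1 y) = y" if "y \<in> \<phi>UQ" for y
        using inv_into_F[OF b1F that] b1img unfolding binv_def by simp
      define \<psi> where "\<psi> = restrict (binv \<circ> restrict (g1 \<circ> a1) UQ) UQ"
      have \<psi>F: "\<psi> \<in> F UQ \<phi>UQ" unfolding \<psi>_def by (rule F_comp[OF F_comp[OF a1F g1F] binvF])
      have \<psi>S: "\<psi> \<in> F UQ (carrier G)" by (rule F_toS[OF \<psi>F])
      have \<psi>val: "\<psi> y = binv (\<gamma>h (\<alpha>h y))" if y: "y \<in> UQ" for y
      proof -
        have "a1 y \<in> XsQ" by (rule F_map[OF a1F y])
        then show ?thesis unfolding \<psi>_def g1_def using y unfolding a1_def by simp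
      qed
      have agree: "\<psi> x = \<phi> x" if x: "x \<in> U" for x
      proof -
        have xUQ: "x \<in> UQ" using x UUQ by blast
        have xY: "x \<in> Y" using x UY by blast
        have px: "\<phi> x \<in> \<phi>U" unfolding \<phi>U_def using x by blast
        have pxN: "\<phi> x \<in> N\<phi>" using px \<phi>UN unfolding N\<phi>_def by blast
        have pxUQ: "\<phi> x \<in> \<phi>UQ" using px U_UQ[OF \<phi>Us] unfolding \<phi>UQ_def by blast
        have "\<gamma>h (\<alpha>h x) = \<beta> (\<phi> x)" using \<alpha>hv[OF xY] \<gamma>hv[of "\<alpha> x"] \<alpha>(3) x \<gamma>v[OF x] by simp
        also have "\<dots> = b1 (\<phi> x)" unfolding b1_def using pxUQ \<beta>hv[OF pxN] by simp
        finally show ?thesis using \<psi>val[OF xUQ] binvv[OF pxUQ] by simp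
      qed
      have \<psi>Q: "\<psi> ` Q = Q"
      proof (rule F_auto_img_eq[OF \<psi>F QUQ])
        show "\<psi> ` Q \<subseteq> Q"
        proof
          fix z assume "z \<in> \<psi> ` Q"
          then obtain q where q: "q \<in> Q" "z = \<psi> q" by blast
          have "\<alpha>h q \<in> Q" using \<alpha>hQ q(1) by blast
          then have "\<gamma>h (\<alpha>h q) \<in> Q" using \<gamma>hQ by blast
          then have "\<gamma>h (\<alpha>h q) \<in> \<beta>h ` Q" using \<beta>hQ by simp
          then obtain q' where q': "q' \<in> Q" "\<gamma>h (\<alpha>h q) = \<beta>h q'" by blast
          have q'UQ: "q' \<in> \<phi>UQ" using q'(1) Q_UQ[OF \<phi>Us] unfolding \<phi>UQ_def by blast
          have "\<beta>h q' = b1 q'" unfolding b1_def using q'UQ by simp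
          then have "\<psi> q = q'" using \<psi>val[of q] q(1) QUQ q'(2) binvv[OF q'UQ] by auto
          then show "z \<in> Q" using q(2) q'(1) by simp
        qed
      qed
      show ?thesis using UUQ QUQ \<psi>S agree \<psi>Q by blast
    qed
  qed
qed

lemma Q_fusion_normal: "fusion_normal G F Q"
  unfolding fusion_normal_def
proof (intro conjI allI impI QS)
  fix U V \<phi> assume \<phi>: "\<phi> \<in> F U V"
  from Pext[OF \<phi>] obtain A1 B1 \<phi>1 where H: "U \<subseteq> A1 \<and> P \<subseteq> A1 \<and> \<phi>1 \<in> F A1 B1 \<and> (\<forall>x\<in>U. \<phi>1 x = \<phi> x) \<and> \<phi>1 ` P = P"
    by (elim exE) (erule that)
  have \<phi>1S: "\<phi>1 \<in> F A1 (carrier G)" using F_toS H by blast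
  have PA1: "P \<subseteq> A1" using H by blast
  from MI[of "card (carrier G) - card A1", rule_format, OF refl PA1 \<phi>1S] obtain D \<psi> where
    H2: "A1 \<subseteq> D \<and> Q \<subseteq> D \<and> \<psi> \<in> F D (carrier G) \<and> (\<forall>x\<in>A1. \<psi> x = \<phi>1 x) \<and> \<psi> ` Q = Q"
    by (elim exE) (erule that)
  have UA1: "U \<subseteq> A1" and a1: "\<forall>x\<in>U. \<phi>1 x = \<phi> x" using H by simp_all
  have A1D: "A1 \<subseteq> D" and QD: "Q \<subseteq> D" and \<psi>F: "\<psi> \<in> F D (carrier G)"
    and a2: "\<forall>x\<in>A1. \<psi> x = \<phi>1 x" and \<psi>Q: "\<psi> ` Q = Q" using H2 by simp_all
  have ag: "\<forall>x\<in>U. \<psi> x = \<phi> x"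
  proof
    fix x assume x: "x \<in> U"
    then have "x \<in> A1" using UA1 by blast
    then show "\<psi> x = \<phi> x" using a1 a2 x by simp
  qed
  have UD: "U \<subseteq> D" using UA1 A1D by (rule subset_trans)
  show "\<exists>A B \<psi>. U \<subseteq> A \<and> Q \<subseteq> A \<and> \<psi> \<in> F A B \<and> (\<forall>x\<in>U. \<psi> x = \<phi> x) \<and> \<psi> ` Q = Q"
    by (rule exI[of _ D], rule exI[of _ "carrier G"], rule exI[of _ \<psi>]) (intro conjI UD QD \<psi>F ag \<psi>Q)
qed

end

theorem lemma1p19:
  fixes G :: "('a, 'b) monoid_scheme" and F :: "'a set \<Rightarrow> 'a set \<Rightarrow> ('a \<Rightarrow> 'a) set"
    and p :: nat and P Q :: "'a set"
  assumes "group G" and "finite (carrier G)" and "Factorial_Ring.prime p" and "\<exists>n. order G = p ^ n"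
    and "saturated_fusion_system p G F"
    and "subgroup P G" and "subgroup Q G" and "P \<subseteq> Q"
    and "fusion_normal G F P"
    and "fusion_normal (G Mod P) (fusion_quotient G F P) ((\<lambda>q. P #>\<^bsub>G\<^esub> q) ` Q)"
    and "(\<forall>x\<in>Q. \<forall>y\<in>Q. x \<otimes>\<^bsub>G\<^esub> y = y \<otimes>\<^bsub>G\<^esub> x) \<or> P \<subseteq> fusion_center G F"
  shows "fusion_normal G F Q"
proof -
  have L: "lctx G F p P Q"
    unfolding lctx_def lctx_axioms_def sfs_def sfs_axioms_def using assms by blast
  show ?thesis by (rule lctx.Q_fusion_normal[OF L])
qed

end
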